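(* Let $J_2=\langle a_1,b_1,a_2,b_2\mid [a_1,b_1][a_2,b_2]\rangle$ be the fundamental group of the closed orientable surface of genus $2$, with symmetric generating set $S=\{a_1^{\pm1},b_1^{\pm1},a_2^{\pm1},b_2^{\pm1}\}$. The spectral radius $\mu_2$ of the simple random walk on the Cayley graph $\mathrm{Cay}(J_2,S)$ satisfies $\mu_2\ge 0.6623$.
   Context: For a connected $d$-regular graph with base vertex $*$, the simple random walk moves from a vertex to each of its $d$ neighbours with probability $1/d$; with $p^{(n)}( *,* )$ the probability of returning to $*$ after $n$ steps, the spectral radius is $\mu=\limsup_{n\to\infty}p^{(n)}( *,* )^{1/n}$ (equal to the norm of the Markov operator on $\ell^2$). The Cayley graph has vertex set $J_2$ and edges $\{g,gs\}$, $g\in J_2$, $s\in S$; here it is $8$-regular. $[a,b]=aba^{-1}b^{-1}$. *)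

theory Defs
  imports Complex_Main "HOL-Library.Extended_Real" "HOL-Library.Liminf_Limsup"
begin

datatype gen = A1 | B1 | A2 | B2

text \<open>A letter of the symmetric generating set S: (g, False) is g, (g, True) is g inverse.
  The type has exactly 8 elements, i.e. S is all letters.\<close>
type_synonym letter = "gen \<times> bool"

definition inv_letter :: "letter \<Rightarrow> letter" where
  "inv_letter x = (fst x, \<not> snd x)"

definition relator :: "letter list" where
  "relator = [(A1,False),(B1,False),(A1,True),(B1,True),
              (A2,False),(B2,False),(A2,True),(B2,True)]"

inductive J2_eq :: "letter list \<Rightarrow> letter list \<Rightarrow> bool" where
  refl: "J2_eq w w"
| sym: "J2_eq u v \<Longrightarrow> J2_eq v u"
| trans: "J2_eq u v \<Longrightarrow> J2_eq v w \<Longrightarrow> J2_eq u w"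
| cancel: "J2_eq (u @ [x, inv_letter x] @ v) (u @ v)"
| rel: "J2_eq (u @ relator @ v) (u @ v)"

text \<open>Simple random walk on Cay(J_2,S) started at the identity: after n steps it sits at
  s_1 ... s_n with (s_1,...,s_n) uniform in S^n.  Hence the n-step return probability.\<close>
definition return_prob :: "nat \<Rightarrow> real" where
  "return_prob n = real (card {w :: letter list. length w = n \<and> J2_eq w []}) / 8 ^ n"

definition spectral_radius_J2 :: ereal where
  "spectral_radius_J2 = limsup (\<lambda>n. ereal (root n (return_prob n)))"

end

theory Submission
  imports Defs
begin


lemma J2_app_right: "J2_eq u v \<Longrightarrow> J2_eq (u @ w) (v @ w)"
proof (induction rule: J2_eq.induct)
  case (refl w) then show ?case by (rule J2_eq.refl)
next
  case (sym u v) then show ?case by (metis J2_eq.sym)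
next
  case (trans u v w') then show ?case by (metis J2_eq.trans)
next
  case (cancel u x v)
  have "J2_eq (u @ [x, inv_letter x] @ (v @ w)) (u @ (v @ w))" by (rule J2_eq.cancel)
  then show ?case by simp
next
  case (rel u v)
  have "J2_eq (u @ relator @ (v @ w)) (u @ (v @ w))" by (rule J2_eq.rel)
  then show ?case by simp
qed

lemma J2_app_left: "J2_eq u v \<Longrightarrow> J2_eq (w @ u) (w @ v)"
proof (induction rule: J2_eq.induct)
  case (refl w) then show ?case by (rule J2_eq.refl)
next
  case (sym u v) then show ?case by (metis J2_eq.sym)
next
  case (trans u v w') then show ?case by (metis J2_eq.trans)
next
  case (cancel u x v)
  have "J2_eq ((w @ u) @ [x, inv_letter x] @ v) ((w @ u) @ v)" by (rule J2_eq.cancel)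
  then show ?case by simp
next
  case (rel u v)
  have "J2_eq ((w @ u) @ relator @ v) ((w @ u) @ v)" by (rule J2_eq.rel)
  then show ?case by simp
qed

lemma J2_app: "J2_eq u u' \<Longrightarrow> J2_eq v v' \<Longrightarrow> J2_eq (u @ v) (u' @ v')"
  by (meson J2_app_left J2_app_right J2_eq.trans)

lemma J2_trans: "J2_eq u v \<Longrightarrow> J2_eq v w \<Longrightarrow> J2_eq u w" by (rule J2_eq.trans)
lemma J2_sym: "J2_eq u v \<Longrightarrow> J2_eq v u" by (rule J2_eq.sym)

lemma inv_inv_letter[simp]: "inv_letter (inv_letter x) = x"
  by (simp add: inv_letter_def)

definition invw :: "letter list \<Rightarrow> letter list" where
  "invw w = rev (map inv_letter w)"

lemma invw_invw[simp]: "invw (invw w) = w"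
  by (simp add: invw_def rev_map comp_def)

lemma J2_cancel2: "J2_eq ([x, inv_letter x]) []"
  using J2_eq.cancel[of "[]" x "[]"] by simp

lemma J2_invw_right: "J2_eq (w @ invw w) []"
proof (induction w)
  case Nil then show ?case by (simp add: invw_def J2_eq.refl)
next
  case (Cons x w)
  have "(x # w) @ invw (x # w) = [x] @ (w @ invw w) @ [inv_letter x]"
    by (simp add: invw_def)
  moreover have "J2_eq ([x] @ (w @ invw w) @ [inv_letter x]) ([x] @ [] @ [inv_letter x])"
    using Cons J2_app_left J2_app_right by blast
  moreover have "J2_eq ([x] @ [] @ [inv_letter x]) []" using J2_cancel2 by simp
  ultimately show ?case by (metis J2_eq.trans)
qed

lemma J2_invw_left: "J2_eq (invw w @ w) []"
  using J2_invw_right[of "invw w"] by simp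

lemma J2_triv_imp: "J2_eq (u @ v) [] \<Longrightarrow> J2_eq u (invw v)"
proof -
  assume h: "J2_eq (u @ v) []"
  have 1: "J2_eq (u @ (v @ invw v)) (u @ [])" by (rule J2_app_left[OF J2_invw_right])
  have 2: "J2_eq ((u @ v) @ invw v) ([] @ invw v)" by (rule J2_app_right[OF h])
  have 3: "J2_eq u ((u @ v) @ invw v)" using J2_sym[OF 1] by simp
  show ?thesis using J2_trans[OF 3 2] by simp
qed

lemma J2_rotate: "J2_eq (u @ v) [] \<Longrightarrow> J2_eq (v @ u) []"
proof -
  assume h: "J2_eq (u @ v) []"
  have a: "J2_eq (v @ ((u @ v) @ invw v)) (v @ ([] @ invw v))"
    by (rule J2_app_left[OF J2_app_right[OF h]])
  have a2: "J2_eq ((v @ u) @ (v @ invw v)) (v @ invw v)" using a by simp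
  have b: "J2_eq ((v @ u) @ (v @ invw v)) ((v @ u) @ [])" by (rule J2_app_left[OF J2_invw_right])
  have b2: "J2_eq (v @ u) ((v @ u) @ (v @ invw v))" using J2_sym[OF b] by simp
  show ?thesis using J2_trans[OF J2_trans[OF b2 a2] J2_invw_right] .
qed

lemma J2_relator: "J2_eq relator []"
  using J2_eq.rel[of "[]" "[]"] by simp

lemma J2_inv_relator: "J2_eq (invw relator) []"
proof -
  have "J2_eq (relator @ invw relator) ([] @ invw relator)" by (rule J2_app_right[OF J2_relator])
  then have "J2_eq (invw relator) (relator @ invw relator)" using J2_sym by simp
  then show ?thesis using J2_invw_right[of relator] J2_trans by blast
qed

lemma J2_rot_rel: "J2_eq (drop r relator @ take r relator) []"
  using J2_rotate[of "take r relator" "drop r relator"] J2_relator by simp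
lemma J2_rot_invrel: "J2_eq (drop r (invw relator) @ take r (invw relator)) []"
  using J2_rotate[of "take r (invw relator)" "drop r (invw relator)"] J2_inv_relator by simp




definition letters :: "letter list" where
  "letters = [(A1,False),(A1,True),(B1,False),(B1,True),(A2,False),(A2,True),(B2,False),(B2,True)]"

lemma UNIV_letter: "(UNIV :: letter set) = set letters"
proof -
  have "x \<in> set letters" for x :: letter
    by (cases x; rename_tac g b; case_tac g; case_tac b; simp add: letters_def)
  then show ?thesis by auto
qed

lemma finite_letter[simp]: "finite (UNIV :: letter set)"
  by (simp add: UNIV_letter)

lemma distinct_letters: "distinct letters" by (simp add: letters_def)

lemma sum_letters: "(\<Sum>s\<in>UNIV. g s) = sum_list (map g letters)"
  by (simp add: UNIV_letter sum.distinct_set_conv_list[OF distinct_letters])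

definition lkl :: "letter list" where
  "lkl = [(A1,True),(B1,False),(A2,False),(B2,True),(A2,True),(B2,False),(A1,False),(B1,True)]"

definition link :: "nat \<Rightarrow> letter" where "link m = lkl ! (m mod 8)"

fun lidx :: "letter \<Rightarrow> nat" where
  "lidx (A1,True) = 0" | "lidx (B1,False) = 1" | "lidx (A2,False) = 2" | "lidx (B2,True) = 3"
| "lidx (A2,True) = 4" | "lidx (B2,False) = 5" | "lidx (A1,False) = 6" | "lidx (B1,True) = 7"

lemma lidx_lt: "lidx s < 8"
  by (cases s rule: lidx.cases) auto

lemma link_lidx: "link (lidx s) = s"
  by (cases s rule: lidx.cases) (auto simp: link_def lkl_def)

definition FWL :: "letter list list" where
  "FWL = [[(A1,True),(B2,False),(A2,False),(B2,True),(A2,True),(B1,False),(A1,False),(B1,True)],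
 [(B1,False),(A1,False),(B1,True),(A1,True),(B2,False),(A2,False),(B2,True),(A2,True)],
 [(A2,False),(B2,True),(A2,True),(B1,False),(A1,False),(B1,True),(A1,True),(B2,False)],
 [(B2,True),(A2,True),(B1,False),(A1,False),(B1,True),(A1,True),(B2,False),(A2,False)],
 [(A2,True),(B1,False),(A1,False),(B1,True),(A1,True),(B2,False),(A2,False),(B2,True)],
 [(B2,False),(A2,False),(B2,True),(A2,True),(B1,False),(A1,False),(B1,True),(A1,True)],
 [(A1,False),(B1,True),(A1,True),(B2,False),(A2,False),(B2,True),(A2,True),(B1,False)],
 [(B1,True),(A1,True),(B2,False),(A2,False),(B2,True),(A2,True),(B1,False),(A1,False)]]"

definition fw :: "nat \<Rightarrow> letter list" where "fw m = FWL ! (m mod 8)"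

definition rotidx :: "nat list" where "rotidx = [7,4,1,2,3,0,5,6]"

lemma lt8_cases: "(m::nat) < 8 \<Longrightarrow> m = 0 \<or> m = 1 \<or> m = 2 \<or> m = 3 \<or> m = 4 \<or> m = 5 \<or> m = 6 \<or> m = 7"
  by auto

lemma fw_rot: "fw m = drop (rotidx ! (m mod 8)) (invw relator) @ take (rotidx ! (m mod 8)) (invw relator)"
proof -
  have "m mod 8 < 8" by simp
  then show ?thesis unfolding fw_def
    by (elim lt8_cases[elim_format]) (auto simp: FWL_def rotidx_def invw_def relator_def inv_letter_def)
qed

lemma J2_fw: "J2_eq (fw m) []"
  using fw_rot J2_rot_invrel by metis

lemma fw_len: "length (fw m) = 8"
proof -
  have "m mod 8 < 8" by simp
  then show ?thesis unfolding fw_def by (elim lt8_cases[elim_format]) (auto simp: FWL_def)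
qed

lemma fw0: "fw m ! 0 = link m"
proof -
  have "m mod 8 < 8" by simp
  then show ?thesis unfolding fw_def link_def by (elim lt8_cases[elim_format]) (auto simp: FWL_def lkl_def)
qed

lemma fw7: "fw m ! 7 = inv_letter (link (Suc m))"
proof -
  have "m mod 8 < 8" by simp
  moreover have "Suc m mod 8 = (if m mod 8 = 7 then 0 else Suc (m mod 8))" by (simp add: mod_Suc)
  ultimately show ?thesis unfolding fw_def link_def
    by (elim lt8_cases[elim_format]) (auto simp: FWL_def lkl_def inv_letter_def)
qed

lemma J2_take7: "J2_eq (take 7 (fw m)) [link (Suc m)]"
proof -
  have e: "fw m = take 7 (fw m) @ [fw m ! 7]"
  proof -
    have "fw m = take 8 (fw m)" by (simp add: fw_len)
    also have "\<dots> = take (Suc 7) (fw m)" by simp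
    also have "\<dots> = take 7 (fw m) @ [fw m ! 7]" by (rule take_Suc_conv_app_nth) (simp add: fw_len)
    finally show ?thesis .
  qed
  have "J2_eq (take 7 (fw m) @ [fw m ! 7]) []" using J2_fw[of m] e by simp
  then have "J2_eq (take 7 (fw m)) (invw [fw m ! 7])" by (rule J2_triv_imp)
  then show ?thesis by (simp add: invw_def fw7)
qed




fun walk :: "('v \<Rightarrow> letter \<Rightarrow> 'v) \<Rightarrow> 'v \<Rightarrow> letter list \<Rightarrow> 'v" where
  "walk st v [] = v"
| "walk st v (s # w) = walk st (st v s) w"

fun Nw :: "('v \<Rightarrow> letter \<Rightarrow> 'v) \<Rightarrow> nat \<Rightarrow> 'v \<Rightarrow> 'v \<Rightarrow> nat" where
  "Nw st 0 v y = (if v = y then 1 else 0)"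
| "Nw st (Suc n) v y = (\<Sum>s\<in>UNIV. Nw st n (st v s) y)"

lemma finite_words: "finite {w :: letter list. length w = n}"
proof -
  have "{w :: letter list. length w = n} = {w. set w \<subseteq> UNIV \<and> length w = n}" by simp
  then show ?thesis using finite_lists_length_eq[OF finite_letter, of n] by simp
qed

lemma Nw_card: "Nw st n v y = card {w. length w = n \<and> walk st v w = y}"
proof (induction n arbitrary: v)
  case 0
  have "{w. length w = 0 \<and> walk st v w = y} = (if v = y then {[]} else {})" by auto
  then show ?case by simp
next
  case (Suc n)
  have eq: "{w. length w = Suc n \<and> walk st v w = y} =
     (\<Union>s\<in>UNIV. (Cons s) ` {w. length w = n \<and> walk st (st v s) w = y})"
    by (auto simp: length_Suc_conv image_iff)
  have fin: "\<And>s. finite ((Cons s) ` {w. length w = n \<and> walk st (st v s) w = y})"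
    using finite_words[of n] by (auto intro: finite_subset)
  have disj: "\<forall>s\<in>UNIV. \<forall>t\<in>UNIV. s \<noteq> t \<longrightarrow>
      (Cons s) ` {w. length w = n \<and> walk st (st v s) w = y} \<inter> (Cons t) ` {w. length w = n \<and> walk st (st v t) w = y} = {}"
    by auto
  have "card {w. length w = Suc n \<and> walk st v w = y} =
     (\<Sum>s\<in>UNIV. card ((Cons s) ` {w. length w = n \<and> walk st (st v s) w = y}))"
    unfolding eq by (rule card_UN_disjoint[OF finite_letter]) (use fin disj in auto)
  also have "\<dots> = (\<Sum>s\<in>UNIV. card {w. length w = n \<and> walk st (st v s) w = y})"
    by (rule sum.cong) (auto simp: card_image)
  finally show ?case using Suc by simp
qed

lemma Nw_concat: "Nw st (n + m) v z \<ge> Nw st n v y * Nw st m y z"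
proof (induction n arbitrary: v)
  case 0 then show ?case by simp
next
  case (Suc n)
  have "Nw st n (st v s) y * Nw st m y z \<le> Nw st (n + m) (st v s) z" for s using Suc by blast
  then have "(\<Sum>s\<in>UNIV. Nw st n (st v s) y * Nw st m y z) \<le> (\<Sum>s\<in>UNIV. Nw st (n + m) (st v s) z)"
    by (rule sum_mono)
  then show ?case by (simp add: sum_distrib_right)
qed

lemma sum_inv_reindex: "(\<Sum>s\<in>(UNIV::letter set). g (inv_letter s)) = (\<Sum>s\<in>UNIV. g s)"
proof -
  have "bij inv_letter" by (metis bij_betw_byWitness inv_inv_letter subset_UNIV image_subset_iff UNIV_I)
  then show ?thesis by (rule sum.reindex_bij_betw)
qed

lemma Nw_last:
  assumes inv: "\<And>v s. v \<in> VS \<Longrightarrow> st v s \<in> VS"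
    and rev: "\<And>v s. v \<in> VS \<Longrightarrow> st (st v s) (inv_letter s) = v"
    and "v \<in> VS" "y \<in> VS"
  shows "Nw st (Suc n) v y = (\<Sum>s\<in>UNIV. Nw st n v (st y s))"
  using assms(3,4)
proof (induction n arbitrary: v)
  case 0
  have "(st v s = y) = (v = st y (inv_letter s))" for s
    using rev[OF 0(1), of s] rev[OF 0(2), of "inv_letter s"] by auto
  then have "(\<Sum>s\<in>UNIV. Nw st 0 (st v s) y) = (\<Sum>s\<in>UNIV. Nw st 0 v (st y (inv_letter s)))"
    by simp
  also have "\<dots> = (\<Sum>s\<in>UNIV. Nw st 0 v (st y s))"
    by (rule sum_inv_reindex)
  finally show ?case by simp
next
  case (Suc n)
  have "Nw st (Suc (Suc n)) v y = (\<Sum>s\<in>UNIV. Nw st (Suc n) (st v s) y)" by simp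
  also have "\<dots> = (\<Sum>s\<in>UNIV. \<Sum>t\<in>UNIV. Nw st n (st v s) (st y t))"
    using Suc.IH inv Suc.prems by auto
  also have "\<dots> = (\<Sum>t\<in>UNIV. \<Sum>s\<in>UNIV. Nw st n (st v s) (st y t))"
    by (rule sum.swap)
  also have "\<dots> = (\<Sum>t\<in>UNIV. Nw st (Suc n) v (st y t))" by simp
  finally show ?case .
qed

lemma Nw_sym:
  assumes inv: "\<And>v s. v \<in> VS \<Longrightarrow> st v s \<in> VS"
    and rev: "\<And>v s. v \<in> VS \<Longrightarrow> st (st v s) (inv_letter s) = v"
    and "v \<in> VS" "y \<in> VS"
  shows "Nw st n v y = Nw st n y v"
  using assms(3,4)
proof (induction n arbitrary: v y)
  case 0 then show ?case by simp
next
  case (Suc n)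
  have "Nw st (Suc n) v y = (\<Sum>s\<in>UNIV. Nw st n (st v s) y)" by simp
  also have "\<dots> = (\<Sum>s\<in>UNIV. Nw st n y (st v s))"
    using Suc.IH inv Suc.prems by auto
  also have "\<dots> = Nw st (Suc n) y v"
    using Nw_last[where VS=VS and st=st and v=y and y=v and n=n, OF inv rev Suc.prems(2) Suc.prems(1)] by simp
  finally show ?case .
qed

lemma walk_J2:
  assumes inv: "\<And>v s. v \<in> VS \<Longrightarrow> st v s \<in> VS"
    and j2: "\<And>v s. v \<in> VS \<Longrightarrow> J2_eq (rep v @ [s]) (rep (st v s))"
    and "v \<in> VS"
  shows "J2_eq (rep v @ w) (rep (walk st v w))"
  using assms(3)
proof (induction w arbitrary: v)
  case Nil then show ?case by (simp add: J2_eq.refl)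
next
  case (Cons s w)
  have "J2_eq (rep v @ [s] @ w) (rep (st v s) @ w)"
    using J2_app_right[OF j2[OF Cons.prems]] by simp
  moreover have "J2_eq (rep (st v s) @ w) (rep (walk st (st v s) w))"
    using Cons.IH inv Cons.prems by blast
  ultimately have "J2_eq (rep v @ [s] @ w) (rep (walk st (st v s) w))" by (rule J2_trans)
  then show ?case by simp
qed

lemma J2_cancel_left: "J2_eq (u @ w) u \<Longrightarrow> J2_eq w []"
proof -
  assume h: "J2_eq (u @ w) u"
  have "J2_eq (invw u @ (u @ w)) (invw u @ u)" by (rule J2_app_left[OF h])
  then have "J2_eq ((invw u @ u) @ w) (invw u @ u)" by simp
  moreover have "J2_eq ((invw u @ u) @ w) ([] @ w)" by (rule J2_app_right[OF J2_invw_left])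
  ultimately have "J2_eq (invw u @ u) ([] @ w)" by (meson J2_sym J2_trans)
  then have "J2_eq w (invw u @ u)" using J2_sym by simp
  then show ?thesis using J2_invw_left J2_trans by blast
qed

lemma weighted_lower:
  fixes f :: "'v \<Rightarrow> real"
  assumes inv: "\<And>v s. v \<in> VS \<Longrightarrow> st v s \<in> VS"
    and fin: "finite Supp" and supp: "\<And>y. f y \<noteq> 0 \<Longrightarrow> y \<in> Supp"
    and fnn: "\<And>v. f v \<ge> 0"
    and lam: "lam \<ge> 0"
    and sub: "\<And>v. v \<in> VS \<Longrightarrow> (\<Sum>s\<in>UNIV. f (st v s)) \<ge> lam * f v"
    and "v \<in> VS"
  shows "(\<Sum>y\<in>Supp. real (Nw st n v y) * f y) \<ge> lam ^ n * f v"
  using assms(7)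
proof (induction n arbitrary: v)
  case 0
  show ?case
  proof (cases "v \<in> Supp")
    case True
    have "(\<Sum>y\<in>Supp. real (Nw st 0 v y) * f y) = (\<Sum>y\<in>Supp. if y = v then f y else 0)"
      by (rule sum.cong) auto
    also have "\<dots> = f v" using True fin by (simp add: sum.delta')
    finally show ?thesis by simp
  next
    case False
    then have "f v = 0" using supp by blast
    moreover have "(\<Sum>y\<in>Supp. real (Nw st 0 v y) * f y) \<ge> 0" using fnn by (auto intro: sum_nonneg)
    ultimately show ?thesis by simp
  qed
next
  case (Suc n)
  have "(\<Sum>y\<in>Supp. real (Nw st (Suc n) v y) * f y) = (\<Sum>y\<in>Supp. \<Sum>s\<in>UNIV. real (Nw st n (st v s) y) * f y)"
    by (simp add: sum_distrib_right)
  also have "\<dots> = (\<Sum>s\<in>UNIV. \<Sum>y\<in>Supp. real (Nw st n (st v s) y) * f y)" by (rule sum.swap)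
  also have "\<dots> \<ge> (\<Sum>s\<in>UNIV. lam ^ n * f (st v s))"
    by (rule sum_mono) (use Suc.IH inv Suc.prems in blast)
  finally have c1: "(\<Sum>y\<in>Supp. real (Nw st (Suc n) v y) * f y) \<ge> lam ^ n * (\<Sum>s\<in>UNIV. f (st v s))"
    by (simp add: sum_distrib_left)
  have c2: "lam ^ n * (\<Sum>s\<in>UNIV. f (st v s)) \<ge> lam ^ n * (lam * f v)"
    using sub[OF Suc.prems] lam by (simp add: mult_left_mono)
  have eq: "lam ^ Suc n * f v = lam ^ n * (lam * f v)" by (simp add: mult_ac)
  show ?case unfolding eq by (rule order_trans[OF c2 c1])
qed

lemma return_lower:
  fixes f :: "'v \<Rightarrow> real"
  assumes inv: "\<And>v s. v \<in> VS \<Longrightarrow> st v s \<in> VS"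
    and rev: "\<And>v s. v \<in> VS \<Longrightarrow> st (st v s) (inv_letter s) = v"
    and j2: "\<And>v s. v \<in> VS \<Longrightarrow> J2_eq (rep v @ [s]) (rep (st v s))"
    and fin: "finite Supp" and supp: "\<And>y. f y \<noteq> 0 \<Longrightarrow> y \<in> Supp" and suppVS: "Supp \<subseteq> VS"
    and fnn: "\<And>v. f v \<ge> 0"
    and lam: "lam \<ge> 0"
    and sub: "\<And>v. v \<in> VS \<Longrightarrow> (\<Sum>s\<in>UNIV. f (st v s)) \<ge> lam * f v"
    and v0: "v0 \<in> VS" "f v0 > 0"
  shows "return_prob (2 * n) \<ge> (lam / 8) ^ (2 * n) * (f v0 / (\<Sum>y\<in>Supp. f y)) ^ 2"
proof -
  define T where "T = (\<Sum>y\<in>Supp. f y)"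
  have v0S: "v0 \<in> Supp" using supp v0(2) by force
  have Tpos: "T > 0"
  proof -
    have "T \<ge> f v0" unfolding T_def using fin v0S fnn by (metis sum_nonneg_leq_bound order_refl)
    then show ?thesis using v0(2) by linarith
  qed
  have Sne: "Supp \<noteq> {}" using v0S by blast
  define M where "M = Max ((\<lambda>y. Nw st n v0 y) ` Supp)"
  have "M \<in> (\<lambda>y. Nw st n v0 y) ` Supp" unfolding M_def using fin Sne by (intro Max_in) auto
  then obtain y where yS: "y \<in> Supp" and yM: "Nw st n v0 y = M" by auto
  have le: "Nw st n v0 z \<le> M" if "z \<in> Supp" for z
    unfolding M_def using fin that by (auto intro: Max_ge)
  have "lam ^ n * f v0 \<le> (\<Sum>z\<in>Supp. real (Nw st n v0 z) * f z)"
    by (rule weighted_lower[OF inv fin supp fnn lam sub v0(1)])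
  also have "\<dots> \<le> (\<Sum>z\<in>Supp. real M * f z)"
    by (rule sum_mono) (use le fnn in \<open>auto intro: mult_right_mono\<close>)
  also have "\<dots> = real M * T" unfolding T_def by (simp add: sum_distrib_left)
  finally have A: "lam ^ n * f v0 / T \<le> real M" using Tpos by (simp add: divide_le_eq)
  have yVS: "y \<in> VS" using yS suppVS by blast
  have "Nw st (n + n) v0 v0 \<ge> Nw st n v0 y * Nw st n y v0" by (rule Nw_concat)
  moreover have "Nw st n y v0 = Nw st n v0 y" by (rule Nw_sym[where VS=VS and st=st, OF inv rev yVS v0(1)])
  ultimately have B0: "Nw st (n + n) v0 v0 \<ge> M * M" using yM by simp
  have B: "real (Nw st (2 * n) v0 v0) \<ge> real M ^ 2"
  proof -
    have "real (M * M) \<le> real (Nw st (n + n) v0 v0)" using B0 by linarith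
    then show ?thesis by (simp add: mult_2 power2_eq_square)
  qed
  have A0: "0 \<le> lam ^ n * f v0 / T" using lam v0(2) Tpos by simp
  have C: "real (Nw st (2 * n) v0 v0) \<ge> (lam ^ n * f v0 / T) ^ 2"
    using B power_mono[OF A A0, of 2] by linarith
  have sub2: "{w. length w = 2 * n \<and> walk st v0 w = v0} \<subseteq> {w. length w = 2 * n \<and> J2_eq w []}"
  proof
    fix w assume "w \<in> {w. length w = 2 * n \<and> walk st v0 w = v0}"
    then have "length w = 2 * n" "walk st v0 w = v0" by auto
    then have "J2_eq (rep v0 @ w) (rep v0)" using walk_J2[OF inv j2 v0(1), of w] by simp
    then show "w \<in> {w. length w = 2 * n \<and> J2_eq w []}" using \<open>length w = 2 * n\<close> J2_cancel_left by blast
  qed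
  have finJ: "finite {w. length w = 2 * n \<and> J2_eq w []}"
    by (rule finite_subset[OF _ finite_words[of "2*n"]]) auto
  have "real (Nw st (2 * n) v0 v0) \<le> real (card {w :: letter list. length w = 2 * n \<and> J2_eq w []})"
    unfolding Nw_card using card_mono[OF finJ sub2] by simp
  then have D: "(lam ^ n * f v0 / T) ^ 2 \<le> real (card {w :: letter list. length w = 2 * n \<and> J2_eq w []})"
    using C by linarith
  have "(lam / 8) ^ (2 * n) * (f v0 / T) ^ 2 = (lam ^ n * f v0 / T) ^ 2 / 8 ^ (2 * n)"
    by (simp add: power_mult_distrib power_divide power_mult field_simps)
  also have "\<dots> \<le> real (card {w :: letter list. length w = 2 * n \<and> J2_eq w []}) / 8 ^ (2 * n)"
    using D by (simp add: divide_right_mono)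
  finally show ?thesis unfolding return_prob_def T_def by simp
qed




type_synonym elem = "nat \<times> nat \<times> nat \<times> nat"

datatype act = InB elem | Pop | Push elem

definition fcnt :: "nat \<Rightarrow> nat \<Rightarrow> nat \<Rightarrow> nat" where
 "fcnt k i j = (if 0 < j then 1 else if 0 < i \<and> i < k then 2 else 1)"

definition inblock :: "elem \<Rightarrow> (letter \<times> act) list" where
"inblock e = (case e of (k,r,i,j) \<Rightarrow>
   if j = 0 then [(inv_letter (link (r+i)), Pop)] @ (if i < k then [(fw (r+i) ! 1, InB (k,r,i,1))] else [])
        @ (if 0 < i then [(inv_letter (fw (r+i-1) ! 6), InB (k,r,i-1,5))] else [])
   else [(fw (r+i) ! (j+1), InB (if j < 5 then (k,r,i,j+1) else (k,r,i+1,0))),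
         (inv_letter (fw (r+i) ! j), InB (if 1 < j then (k,r,i,j-1) else (k,r,i,0)))])"

definition ulist :: "elem \<Rightarrow> letter list" where "ulist e = map fst (inblock e)"

definition rho2 :: "letter list \<Rightarrow> nat" where
 "rho2 U = hd (filter (\<lambda>m. link m \<notin> set U \<and> link (m+7) \<in> set U) [0..<8])"

definition child_blk :: "elem \<Rightarrow> nat \<times> nat" where
 "child_blk e = (case e of (k,r,i,j) \<Rightarrow> (6 - fcnt k i j, rho2 (ulist e)))"

definition entry :: "nat \<times> nat \<Rightarrow> letter \<Rightarrow> elem" where
 "entry B t = (fst B, snd B, (lidx t + 8 - snd B) mod 8, 0)"

definition act :: "elem \<Rightarrow> letter \<Rightarrow> act" where
 "act e s = (case map_of (inblock e) s of Some a \<Rightarrow> a | None \<Rightarrow> Push (entry (child_blk e) s))"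

definition blk :: "elem \<Rightarrow> nat \<times> nat" where "blk e = (fst e, fst (snd e))"

definition velem :: "elem \<Rightarrow> bool" where
 "velem e = (case e of (k,r,i,j) \<Rightarrow> ((k = 7 \<and> r = 0) \<or> ((k = 4 \<or> k = 5) \<and> r < 8)) \<and>
     ((j = 0 \<and> i \<le> k) \<or> (0 < j \<and> j \<le> 5 \<and> i < k)))"

definition Qc :: "letter list \<Rightarrow> nat \<Rightarrow> bool" where
 "Qc U k2 = (distinct U \<and> rho2 U < 8 \<and> list_all (\<lambda>t. (t \<notin> set U) = ((lidx t + 8 - rho2 U) mod 8 \<le> k2)) letters)"

definition xconf :: "nat \<Rightarrow> nat \<Rightarrow> letter list" where
 "xconf m j = [fw m ! (j+1), inv_letter (fw m ! j)]"
definition sconf :: "nat \<Rightarrow> bool \<Rightarrow> bool \<Rightarrow> letter list" where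
 "sconf m a b = [inv_letter (link m)] @ (if a then [fw m ! 1] else []) @ (if b then [inv_letter (fw (m+7) ! 6)] else [])"

definition QX :: bool where
 "QX = list_all (\<lambda>m. list_all (\<lambda>j. Qc (xconf m j) 5) [1..<6]) [0..<8]"
definition QS :: bool where
 "QS = list_all (\<lambda>m. Qc (sconf m True True) 4 \<and> Qc (sconf m True False) 5 \<and> Qc (sconf m False True) 5) [0..<8]"

lemma QX_ok: QX by code_simp
lemma QS_ok: QS by code_simp

lemma fw_mod: "fw (m mod 8) = fw m" by (simp add: fw_def)
lemma link_mod: "link (m mod 8) = link m" by (simp add: link_def)

lemma Qc_elem:
  assumes "velem e"
  shows "Qc (ulist e) (fst (child_blk e))"
proof -
  obtain k r i j where e: "e = (k,r,i,j)" by (cases e) auto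
  define m where "m = (r + i) mod 8"
  have m8: "m < 8" unfolding m_def by simp
  have fwm: "fw (r+i) = fw m" "link (r+i) = link m" unfolding m_def by (simp_all add: fw_mod link_mod)
  show ?thesis
  proof (cases "j = 0")
    case True
    have k: "k \<ge> 4" "i \<le> k" using assms True unfolding e velem_def by auto
    have fw1: "0 < i \<Longrightarrow> fw (r + i - 1) = fw (m + 7)"
    proof -
      assume i0: "0 < i"
      have "(m + 7) mod 8 = (r + i + 7) mod 8" unfolding m_def by (simp add: mod_add_left_eq)
      also have "r + i + 7 = (r + i - 1) + 8" using i0 by simp
      finally have "(m + 7) mod 8 = (r + i - 1) mod 8" by simp
      then show ?thesis by (metis fw_mod)
    qed
    have "list_all (\<lambda>m. Qc (sconf m True True) 4 \<and> Qc (sconf m True False) 5 \<and> Qc (sconf m False True) 5) [0..<8]"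
      using QS_ok unfolding QS_def .
    then have q: "Qc (sconf m True True) 4" "Qc (sconf m True False) 5" "Qc (sconf m False True) 5"
      using m8 by (auto simp: list_all_iff)
    have ul0: "ulist e = [inv_letter (link (r+i))] @ (if i < k then [fw (r+i) ! 1] else [])
        @ (if 0 < i then [inv_letter (fw (r+i-1) ! 6)] else [])"
      by (simp add: ulist_def inblock_def e True)
    have ul: "ulist e = sconf m (i < k) (0 < i)"
      unfolding ul0 sconf_def fwm using fw1 by (cases "0 < i") simp_all
    have cb: "fst (child_blk e) = (if 0 < i \<and> i < k then 4 else 5)"
      by (simp add: child_blk_def e fcnt_def True)
    have "0 < i \<or> i < k" using k by auto
    then show ?thesis unfolding ul cb using q by (cases "0 < i"; cases "i < k") simp_all
  next
    case False
    have "list_all (\<lambda>m. list_all (\<lambda>j. Qc (xconf m j) 5) [1..<6]) [0..<8]"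
      using QX_ok unfolding QX_def .
    moreover have "j \<in> set [1..<6]" using assms False unfolding e velem_def by auto
    ultimately have q: "Qc (xconf m j) 5" using m8 by (auto simp: list_all_iff)
    have ul: "ulist e = xconf m j"
      by (simp add: ulist_def inblock_def e False xconf_def fwm)
    have cb: "fst (child_blk e) = 5"
      using False by (simp add: child_blk_def e fcnt_def)
    show ?thesis unfolding ul cb by (rule q)
  qed
qed


lemma velem_child:
  assumes "velem e"
  shows "fst (child_blk e) = 4 \<or> fst (child_blk e) = 5" "snd (child_blk e) < 8"
proof -
  show "fst (child_blk e) = 4 \<or> fst (child_blk e) = 5"
    by (cases e) (auto simp: child_blk_def fcnt_def)
  show "snd (child_blk e) < 8"
    using Qc_elem[OF assms] by (cases e) (simp add: Qc_def child_blk_def)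
qed

lemma distinct_ulist: "velem e \<Longrightarrow> distinct (map fst (inblock e))"
  using Qc_elem unfolding Qc_def ulist_def by blast

lemma notin_iff:
  assumes "velem e"
  shows "(t \<notin> set (ulist e)) = ((lidx t + 8 - snd (child_blk e)) mod 8 \<le> fst (child_blk e))"
proof -
  have "t \<in> set letters" using UNIV_letter by auto
  moreover have "snd (child_blk e) = rho2 (ulist e)" by (cases e) (simp add: child_blk_def)
  ultimately show ?thesis using Qc_elem[OF assms] unfolding Qc_def list_all_iff by auto
qed

lemma act_in: "velem e \<Longrightarrow> (s, a) \<in> set (inblock e) \<Longrightarrow> act e s = a"
  unfolding act_def using map_of_is_SomeI[OF distinct_ulist] by simp

lemma act_out: "s \<notin> set (ulist e) \<Longrightarrow> act e s = Push (entry (child_blk e) s)"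
proof -
  assume "s \<notin> set (ulist e)"
  then have "map_of (inblock e) s = None" unfolding ulist_def by (simp add: map_of_eq_None_iff)
  then show ?thesis unfolding act_def by simp
qed

lemma inblock_noPush: "(s, Push e2) \<notin> set (inblock e)"
  by (cases e) (auto simp: inblock_def)

lemma act_InB: "act e s = InB e' \<Longrightarrow> (s, InB e') \<in> set (inblock e)"
  unfolding act_def by (auto split: option.splits dest: map_of_SomeD)
lemma act_Pop: "act e s = Pop \<Longrightarrow> (s, Pop) \<in> set (inblock e)"
  unfolding act_def by (auto split: option.splits dest: map_of_SomeD)
lemma act_Push: "act e s = Push e2 \<Longrightarrow> s \<notin> set (ulist e) \<and> e2 = entry (child_blk e) s"
  unfolding act_def ulist_def
  by (auto split: option.splits dest: map_of_SomeD simp: inblock_noPush map_of_eq_None_iff)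

lemma link_lidx_mod:
  assumes "r < 8"
  shows "link (r + (lidx t + 8 - r) mod 8) = t"
proof -
  have l: "lidx t < 8" by (rule lidx_lt)
  have "(r + (lidx t + 8 - r) mod 8) mod 8 = (r + (lidx t + 8 - r)) mod 8" by (simp add: mod_add_right_eq)
  also have "r + (lidx t + 8 - r) = lidx t + 8" using assms by simp
  also have "(lidx t + 8) mod 8 = lidx t" using l by simp
  finally show ?thesis by (metis link_mod link_lidx)
qed

lemma lidx_link: "lidx (link m) = m mod 8"
proof -
  have "m mod 8 < 8" by simp
  then show ?thesis unfolding link_def by (elim lt8_cases[elim_format]) (auto simp: lkl_def)
qed

lemma R_in:
  assumes "velem e" "(s, InB e') \<in> set (inblock e)"
  shows "velem e' \<and> blk e' = blk e \<and> (inv_letter s, InB e) \<in> set (inblock e')"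
proof -
  obtain k r i j where e: "e = (k,r,i,j)" by (cases e) auto
  show ?thesis
  proof (cases "j = 0")
    case True
    then have "(s = fw (r+i) ! 1 \<and> e' = (k,r,i,1) \<and> i < k) \<or>
               (s = inv_letter (fw (r+i-1) ! 6) \<and> e' = (k,r,i-1,5) \<and> 0 < i)"
      using assms(2) by (auto simp: e inblock_def split: if_splits)
    then show ?thesis
    proof
      assume h: "s = fw (r+i) ! 1 \<and> e' = (k,r,i,1) \<and> i < k"
      then show ?thesis using assms(1) True by (auto simp: e inblock_def velem_def blk_def)
    next
      assume h: "s = inv_letter (fw (r+i-1) ! 6) \<and> e' = (k,r,i-1,5) \<and> 0 < i"
      then have "r + (i - 1) = r + i - 1" "i - 1 + 1 = i" "i - 1 < k" using assms(1) True by (auto simp: e velem_def)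
      then show ?thesis using h assms(1) True by (auto simp: e inblock_def velem_def blk_def)
    qed
  next
    case False
    then have "(s = fw (r+i) ! (j+1) \<and> e' = (if j < 5 then (k,r,i,j+1) else (k,r,i+1,0))) \<or>
               (s = inv_letter (fw (r+i) ! j) \<and> e' = (if 1 < j then (k,r,i,j-1) else (k,r,i,0)))"
      using assms(2) by (auto simp: e inblock_def)
    then show ?thesis
    proof
      assume h: "s = fw (r+i) ! (j+1) \<and> e' = (if j < 5 then (k,r,i,j+1) else (k,r,i+1,0))"
      show ?thesis
      proof (cases "j < 5")
        case True
        then show ?thesis using h assms(1) False by (auto simp: e inblock_def velem_def blk_def)
      next
        case j5: False
        then have "j = 5" using assms(1) False by (auto simp: e velem_def)
        then show ?thesis using h assms(1) False by (auto simp: e inblock_def velem_def blk_def)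
      qed
    next
      assume h: "s = inv_letter (fw (r+i) ! j) \<and> e' = (if 1 < j then (k,r,i,j-1) else (k,r,i,0))"
      show ?thesis
      proof (cases "1 < j")
        case True
        then have "j - 1 + 1 = j" "j - 1 < 5" "j - 1 \<noteq> 0" using assms(1) by (auto simp: e velem_def)
        then show ?thesis using h assms(1) True by (auto simp: e inblock_def velem_def blk_def)
      next
        case j1: False
        then have "j = 1" using False by simp
        then show ?thesis using h assms(1) by (auto simp: e inblock_def velem_def blk_def)
      qed
    qed
  qed
qed

lemma R_pop:
  assumes "(s, Pop) \<in> set (inblock e)"
  shows "snd (snd (snd e)) = 0 \<and> s = inv_letter (link (fst (snd e) + fst (snd (snd e))))"
  using assms by (cases e) (auto simp: inblock_def split: if_splits)

lemma entry_spoke: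
  assumes "velem (k,r,i,0)"
  shows "entry (k,r) (link (r+i)) = (k,r,i,0)"
proof -
  have "r < 8" "i < 8" using assms by (auto simp: velem_def)
  have "((r + i) mod 8 + 8 - r) mod 8 = i"
  proof -
    have "(r + i) mod 8 + 8 - r = (r+i) mod 8 + (8 - r)" using \<open>r < 8\<close> by simp
    then have "((r + i) mod 8 + 8 - r) mod 8 = ((r + i) + (8 - r)) mod 8" by (simp add: mod_add_left_eq)
    also have "(r + i) + (8 - r) = i + 8" using \<open>r < 8\<close> by simp
    finally show ?thesis using \<open>i < 8\<close> by simp
  qed
  then show ?thesis by (simp add: entry_def lidx_link)
qed




definition word :: "elem \<Rightarrow> letter list" where
  "word e = (case e of (k,r,i,j) \<Rightarrow> if j = 0 then [link (r+i)] else take (j+1) (fw (r+i)))"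

definition rep :: "elem list \<Rightarrow> letter list" where "rep v = concat (map word v)"

definition step :: "elem list \<Rightarrow> letter \<Rightarrow> elem list" where
  "step v s = (if v = [] then [entry (7,0) s] else
     (case act (last v) s of InB e' \<Rightarrow> butlast v @ [e'] | Pop \<Rightarrow> butlast v | Push e2 \<Rightarrow> v @ [e2]))"

fun validf :: "nat \<times> nat \<Rightarrow> elem list \<Rightarrow> bool" where
  "validf B [] = True"
| "validf B (e # es) = (velem e \<and> blk e = B \<and> validf (child_blk e) es)"

definition valid :: "elem list \<Rightarrow> bool" where "valid v = validf (7,0) v"

lemma validf_snoc: "validf B (xs @ [e]) = (validf B xs \<and> velem e \<and> blk e = (if xs = [] then B else child_blk (last xs)))"
  by (induction xs arbitrary: B) auto

lemma step_snoc: "step (xs @ [e]) s =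
   (case act e s of InB e' \<Rightarrow> xs @ [e'] | Pop \<Rightarrow> xs | Push e2 \<Rightarrow> xs @ [e, e2])"
  by (simp add: step_def split: act.splits)

lemma velem_entry7: "velem (entry (7,0) t)"
  using lidx_lt[of t] by (simp add: entry_def velem_def)

lemma act_entry_pop:
  assumes "velem e2" "snd (snd (snd e2)) = 0" "s = link (fst (snd e2) + fst (snd (snd e2)))"
  shows "act e2 (inv_letter s) = Pop"
  using assms by (cases e2) (simp add: act_def inblock_def)

lemma entry_velem_push:
  assumes "velem a" "t \<notin> set (ulist a)"
  shows "velem (entry (child_blk a) t)"
  using notin_iff[OF assms(1), of t] assms(2) velem_child[OF assms(1)]
  by (auto simp: entry_def velem_def)

lemma entry_is_spoke: "entry B t = (fst B, snd B, (lidx t + 8 - snd B) mod 8, 0)"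
  by (simp add: entry_def)

lemma act_entry_pop2:
  assumes "velem a" "t \<notin> set (ulist a)"
  shows "act (entry (child_blk a) t) (inv_letter t) = Pop"
proof -
  have "link (snd (child_blk a) + (lidx t + 8 - snd (child_blk a)) mod 8) = t"
    by (rule link_lidx_mod[OF velem_child(2)[OF assms(1)]])
  then show ?thesis
    using act_entry_pop[OF entry_velem_push[OF assms]] by (simp add: entry_def)
qed

lemma step_valid_rev:
  assumes "valid v"
  shows "valid (step v s) \<and> step (step v s) (inv_letter s) = v"
proof (cases "v = []")
  case True
  have ve: "velem (entry (7,0) s)" by (rule velem_entry7)
  have pop: "act (entry (7,0) s) (inv_letter s) = Pop"
    using act_entry_pop[OF ve] lidx_lt[of s] link_lidx[of s] by (simp add: entry_def)
  show ?thesis using True ve pop by (simp add: step_def valid_def blk_def entry_def)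
next
  case False
  then obtain xs e where v: "v = xs @ [e]" by (metis append_butlast_last_id)
  have vx: "validf (7,0) xs" and ve: "velem e" and be: "blk e = (if xs = [] then (7,0) else child_blk (last xs))"
    using assms by (auto simp: v valid_def validf_snoc)
  show ?thesis
  proof (cases "act e s")
    case (InB e')
    have h: "(s, InB e') \<in> set (inblock e)" by (rule act_InB[OF InB])
    from R_in[OF ve h] have r: "velem e'" "blk e' = blk e" "(inv_letter s, InB e) \<in> set (inblock e')" by auto
    have "act e' (inv_letter s) = InB e" by (rule act_in[OF r(1) r(3)])
    then show ?thesis using InB r vx be by (simp add: v step_snoc valid_def validf_snoc)
  next
    case Pop
    have h: "(s, Pop) \<in> set (inblock e)" by (rule act_Pop[OF Pop])
    obtain k r i j where e: "e = (k,r,i,j)" by (cases e) auto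
    from R_pop[OF h] have j0: "j = 0" and s: "s = inv_letter (link (r + i))" by (auto simp: e)
    have ent: "entry (k,r) (inv_letter s) = e" using entry_spoke[of k r i] ve by (simp add: e j0 s)
    show ?thesis
    proof (cases "xs = []")
      case True
      have "blk e = (7,0)" using be True by simp
      then have "entry (7,0) (inv_letter s) = e" using ent by (simp add: e blk_def)
      then show ?thesis using Pop True by (simp add: v step_snoc step_def valid_def)
    next
      case False
      then obtain ys a where xs: "xs = ys @ [a]" by (metis append_butlast_last_id)
      have va: "velem a" using vx by (simp add: xs validf_snoc)
      have cb: "child_blk a = (k,r)" using be by (simp add: xs e blk_def)
      have nin: "inv_letter s \<notin> set (ulist a)"
      proof -
        have "velem (entry (child_blk a) (inv_letter s))" using ent cb ve by simp
        then have "((lidx (inv_letter s) + 8 - snd (child_blk a)) mod 8 \<le> fst (child_blk a))"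
          by (simp add: entry_def velem_def)
        then show ?thesis using notin_iff[OF va] by blast
      qed
      have ap: "act a (inv_letter s) = Push e" using act_out[OF nin] cb ent by simp
      have s1: "step v s = xs" unfolding v step_snoc using Pop by simp
      have s2: "step xs (inv_letter s) = v" unfolding xs step_snoc using ap by (simp add: v xs)
      show ?thesis using s1 s2 vx by (simp add: valid_def)
    qed
  next
    case (Push e2)
    from act_Push[OF Push] have nin: "s \<notin> set (ulist e)" and e2: "e2 = entry (child_blk e) s" by auto
    have ve2: "velem e2" using entry_velem_push[OF ve nin] e2 by simp
    have be2: "blk e2 = child_blk e" using e2 by (simp add: entry_def blk_def)
    have ap: "act e2 (inv_letter s) = Pop" using act_entry_pop2[OF ve nin] e2 by simp
    have s1: "step v s = v @ [e2]" unfolding v step_snoc using Push by simp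
    have s2: "step (v @ [e2]) (inv_letter s) = v" unfolding step_snoc using ap by simp
    have "validf (7,0) (v @ [e2])" unfolding validf_snoc using assms ve2 be2 by (simp add: valid_def v)
    then have "valid (v @ [e2])" by (simp add: valid_def)
    then show ?thesis using s1 s2 by simp
  qed
qed


lemma J2_cancel_end: "J2_eq (u @ [x, inv_letter x]) u"
  using J2_eq.cancel[of u x "[]"] by simp

lemma take_snoc_nth: "n < length w \<Longrightarrow> take n w @ [w ! n] = take (Suc n) w"
  by (simp add: take_Suc_conv_app_nth)

lemma J_in:
  assumes "velem e" "(s, InB e') \<in> set (inblock e)"
  shows "J2_eq (word e @ [s]) (word e')"
proof -
  obtain k r i j where e: "e = (k,r,i,j)" by (cases e) auto
  show ?thesis
  proof (cases "j = 0")
    case True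
    then have "(s = fw (r+i) ! 1 \<and> e' = (k,r,i,1)) \<or>
               (s = inv_letter (fw (r+i-1) ! 6) \<and> e' = (k,r,i-1,5) \<and> 0 < i)"
      using assms(2) by (auto simp: e inblock_def split: if_splits)
    then show ?thesis
    proof
      assume h: "s = fw (r+i) ! 1 \<and> e' = (k,r,i,1)"
      have "take (Suc (Suc 0)) (fw (r+i)) = [link (r+i), fw (r+i) ! 1]"
        using fw_len[of "r+i"] fw0[of "r+i"] by (simp add: take_Suc_conv_app_nth)
      then show ?thesis using h True by (simp add: e word_def J2_eq.refl)
    next
      assume h: "s = inv_letter (fw (r+i-1) ! 6) \<and> e' = (k,r,i-1,5) \<and> 0 < i"
      define w where "w = fw (r+i-1)"
      have i: "r + (i - 1) = r + i - 1" "Suc (r + i - 1) = r + i" using h by auto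
      have t7: "J2_eq (take 6 w @ [w ! 6]) [link (r+i)]"
        using J2_take7[of "r+i-1"] take_snoc_nth[of 6 w] fw_len[of "r+i-1"] i unfolding w_def by simp
      have a: "J2_eq ((take 6 w @ [w ! 6]) @ [inv_letter (w ! 6)]) ([link (r+i)] @ [inv_letter (w ! 6)])"
        by (rule J2_app_right[OF t7])
      have b: "J2_eq ((take 6 w @ [w ! 6]) @ [inv_letter (w ! 6)]) (take 6 w)"
        using J2_cancel_end[of "take 6 w" "w ! 6"] by simp
      have "J2_eq ([link (r+i)] @ [inv_letter (w ! 6)]) (take 6 w)"
        using J2_trans[OF J2_sym[OF a] b] .
      then show ?thesis using h True i by (simp add: e word_def w_def)
    qed
  next
    case False
    define w where "w = fw (r+i)"
    have jv: "j \<le> 5" using assms(1) False by (auto simp: e velem_def)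
    have lw: "length w = 8" unfolding w_def by (rule fw_len)
    have "(s = w ! (j+1) \<and> e' = (if j < 5 then (k,r,i,j+1) else (k,r,i+1,0))) \<or>
               (s = inv_letter (w ! j) \<and> e' = (if 1 < j then (k,r,i,j-1) else (k,r,i,0)))"
      using assms(2) False by (auto simp: e inblock_def w_def)
    then show ?thesis
    proof
      assume h: "s = w ! (j+1) \<and> e' = (if j < 5 then (k,r,i,j+1) else (k,r,i+1,0))"
      have tk: "take (j+1) w @ [w ! (j+1)] = take (Suc (j+1)) w"
        by (rule take_snoc_nth) (use lw jv in simp)
      show ?thesis
      proof (cases "j < 5")
        case True
        then show ?thesis using h False tk by (simp add: e word_def w_def[symmetric] J2_eq.refl)
      next
        case j5: False
        then have "j = 5" using jv by simp
        then have "J2_eq (take (j+1) w @ [w ! (j+1)]) [link (Suc (r+i))]"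
          using tk J2_take7[of "r+i"] unfolding w_def by simp
        then show ?thesis using h False j5 by (simp add: e word_def w_def[symmetric])
      qed
    next
      assume h: "s = inv_letter (w ! j) \<and> e' = (if 1 < j then (k,r,i,j-1) else (k,r,i,0))"
      have tk: "take j w @ [w ! j] = take (Suc j) w"
        by (rule take_snoc_nth) (use lw jv in simp)
      have c: "J2_eq (take (j+1) w @ [inv_letter (w ! j)]) (take j w)"
      proof -
        have "take (j+1) w @ [inv_letter (w ! j)] = take j w @ [w ! j, inv_letter (w ! j)]"
          using tk[symmetric] by simp
        then show ?thesis using J2_cancel_end[of "take j w" "w ! j"] by simp
      qed
      show ?thesis
      proof (cases "1 < j")
        case True
        then show ?thesis using h c by (simp add: e word_def w_def[symmetric])
      next
        case j1: False
        then have "j = 1" using False by simp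
        moreover have "take 1 w = [link (r+i)]"
          using lw fw0[of "r+i"] unfolding w_def by (simp add: take_Suc_conv_app_nth)
        ultimately show ?thesis using h c by (simp add: e word_def w_def[symmetric])
      qed
    qed
  qed
qed

lemma rep_snoc: "rep (xs @ [e]) = rep xs @ word e" by (simp add: rep_def)

lemma step_J2:
  assumes "valid v"
  shows "J2_eq (rep v @ [s]) (rep (step v s))"
proof (cases "v = []")
  case True
  have "rep (step v s) = [s]"
    using True lidx_lt[of s] link_lidx[of s] by (simp add: step_def rep_def word_def entry_def)
  then show ?thesis using True by (simp add: rep_def J2_eq.refl)
next
  case False
  then obtain xs e where v: "v = xs @ [e]" by (metis append_butlast_last_id)
  have ve: "velem e" using assms by (auto simp: v valid_def validf_snoc)
  show ?thesis
  proof (cases "act e s")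
    case (InB e')
    have "J2_eq (word e @ [s]) (word e')" by (rule J_in[OF ve act_InB[OF InB]])
    then have "J2_eq (rep xs @ (word e @ [s])) (rep xs @ word e')" by (rule J2_app_left)
    then show ?thesis using InB by (simp add: v step_snoc rep_snoc)
  next
    case Pop
    obtain k r i j where e: "e = (k,r,i,j)" by (cases e) auto
    from R_pop[OF act_Pop[OF Pop]] have j0: "j = 0" and s: "s = inv_letter (link (r + i))" by (auto simp: e)
    have "J2_eq (rep xs @ [link (r+i), inv_letter (link (r+i))]) (rep xs)" by (rule J2_cancel_end)
    then show ?thesis using Pop by (simp add: v step_snoc rep_snoc e j0 s word_def)
  next
    case (Push e2)
    from act_Push[OF Push] have e2: "e2 = entry (child_blk e) s" by auto
    have "word e2 = [s]"
      using link_lidx_mod[OF velem_child(2)[OF ve], of s] by (simp add: e2 entry_def word_def)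
    then show ?thesis using Push by (simp add: v step_snoc rep_def J2_eq.refl)
  qed
qed




type_synonym lvl = "int list \<times> int list \<times> int list"

definition KK :: nat where "KK = 26"

definition positions :: "nat \<Rightarrow> (nat\<times>nat) list" where
 "positions k = map (\<lambda>i. (i,0)) [0..<k+1] @ concat (map (\<lambda>i. map (\<lambda>j. (i,j)) [1..<6]) [0..<k])"
definition pidx :: "nat \<Rightarrow> nat \<times> nat \<Rightarrow> nat" where
 "pidx k p = (if snd p = 0 then fst p else k + 1 + fst p * 5 + (snd p - 1))"
definition nbrs :: "nat \<Rightarrow> nat \<times> nat \<Rightarrow> (nat\<times>nat) list" where
 "nbrs k p = (if snd p = 0 then (if fst p < k then [(fst p,1)] else []) @ (if 0 < fst p then [(fst p - 1,5)] else [])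
      else [if snd p < 5 then (fst p,snd p+1) else (fst p+1,0), if 1 < snd p then (fst p,snd p - 1) else (fst p,0)])"
definition lk0 :: "int list \<Rightarrow> nat \<Rightarrow> int" where "lk0 xs n = (if n < length xs then xs ! n else 0)"
definition cmpk :: "lvl \<Rightarrow> nat \<Rightarrow> int list" where
 "cmpk v k = (if k = 7 then fst v else if k = 4 then fst (snd v) else if k = 5 then snd (snd v) else [])"
definition ineq_ok :: "bool \<Rightarrow> lvl \<Rightarrow> lvl \<Rightarrow> nat \<Rightarrow> nat \<times> nat \<Rightarrow> bool" where
 "ineq_ok tp a b k p = (let xs = cmpk a k; x = lk0 xs (pidx k p); k2 = 6 - fcnt k (fst p) (snd p);
     D = sum_list (map (lk0 (cmpk b k2)) [0..<k2+1]) in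
   0 \<le> x \<and> 52985 * 2^KK * x \<le> 10000 * (2^KK * sum_list (map (\<lambda>q. lk0 xs (pidx k q)) (nbrs k p))
         + (if snd p = 0 \<and> \<not> tp then 2^(2*KK) else 0) + x * D))"
definition level_ok :: "bool \<Rightarrow> lvl \<Rightarrow> lvl \<Rightarrow> bool" where
 "level_ok tp a b = list_all (\<lambda>k. list_all (ineq_ok tp a b k) (positions k)) [4,5,7]"
fun chk :: "bool \<Rightarrow> lvl list \<Rightarrow> bool" where
 "chk tp [] = True" | "chk tp [a] = level_ok tp a ([],[],[])" | "chk tp (a#b#r) = (level_ok tp a b \<and> chk False (b#r))"

definition tb0 :: "lvl list" where "tb0 = [([10052852,22198957,31342030,36245213,36245213,31342030,22198957,10052852,18998486,25851633,29857491,30574855,27924715,35588785,45058876,49566198,48614317,42308071,47364701,58170640,62569685,60077327,50968073,52733211,63413191,67108864,63413191,52733211,50968073,60077327,62569685,58170640,47364701,42308071,48614317,49566198,45058876,35588785,27924715,30574855,29857491,25851633,18998486],[],[]),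
([],[52556172,64168488,65019366,64168488,52556172,43528438,39076623,38732730,42460608,50652150,51857337,44997678,42868391,45245635,52379318,52379318,45245635,42868391,44997678,51857337,50652150,42460608,38732730,39076623,43528438],[52556578,64174336,65092921,65092921,64174336,52556578,43529292,39078014,38734805,42463585,50656342,51868602,45015545,42894739,45283233,52432119,52520946,45470225,43199553,45470225,52520946,52432119,45283233,42894739,45015545,51868602,50656342,42463585,38734805,39078014,43529292]),
([],[34933707,36101894,36117744,36101894,34933707,18867719,11502305,9441010,11733300,19436230,19467347,11809883,9598375,11813017,19475061,19475061,11813017,9598375,11809883,19467347,19436230,11733300,9441010,11502305,18867719],[34933707,36101897,36117965,36117965,36101897,34933707,18867719,11502305,9441011,11733301,19436231,19467354,11809898,9598405,11813076,19475174,19475596,11814115,9600540,11814115,19475596,19475174,11813076,9598405,11809898,19467354,19436231,11733301,9441011,11502305,18867719]),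
([],[31412237,31895882,31899685,31895882,31412237,15122092,8174377,6276792,8257011,15338411,15346668,8278627,6325121,8279276,15348369,15348369,8279276,6325121,8278627,15346668,15338411,8257011,6276792,8174377,15122092],[31412237,31895883,31899715,31899715,31895883,31412237,15122092,8174377,6276792,8257011,15338411,15346669,8278628,6325124,8279283,15348383,15348448,8279453,6325504,8279453,15348448,15348383,8279283,6325124,8278628,15346669,15338411,8257011,6276792,8174377,15122092]),
([],[29791489,30078918,30080623,30078918,29791489,13548813,6890657,5106998,6936064,13671748,13675644,6946613,5131662,6946882,13676374,13676374,6946882,5131662,6946613,13675644,13671748,6936064,5106998,6890657,13548813],[29791489,30078918,30080634,30080634,30078918,29791489,13548813,6890657,5106998,6936064,13671748,13675645,6946613,5131663,6946884,13676378,13676401,6946947,5131809,6946947,13676401,13676378,6946884,5131663,6946613,13675645,13671748,6936064,5106998,6890657,13548813]),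
([],[28845956,29048685,29049696,29048685,28845956,12674624,6210111,4501590,6240597,12758944,12761326,6247186,4517432,6247338,12761747,12761747,6247338,4517432,6247186,12761326,12758944,6240597,4501590,6210111,12674624],[28845956,29048685,29049701,29049701,29048685,28845956,12674624,6210111,4501590,6240597,12758944,12761327,6247186,4517432,6247339,12761749,12761761,6247372,4517511,6247372,12761761,12761749,6247339,4517432,6247186,12761327,12758944,6240597,4501590,6210111,12674624]),
([],[28222356,28380183,28380882,28380183,28222356,12115560,5787854,4131821,5810793,12179955,12181637,5815515,4143393,5815616,12181922,12181922,5815616,4143393,5815515,12181637,12179955,5810793,4131821,5787854,12115560],[28222356,28380183,28380885,28380885,28380183,28222356,12115560,5787854,4131821,5810793,12179955,12181637,5815515,4143393,5815617,12181923,12181931,5815638,4143444,5815638,12181931,12181923,5815617,4143393,5815515,12181637,12179955,5810793,4131821,5787854,12115560]),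
([],[27778413,27909261,27909792,27909261,27778413,11725979,5499792,3882373,5518341,11778621,11779919,5522026,3891532,5522101,11780133,11780133,5522101,3891532,5522026,11779919,11778621,5518341,3882373,5499792,11725979],[27778413,27909261,27909794,27909794,27909261,27778413,11725979,5499792,3882373,5518341,11778621,11779919,5522026,3891532,5522102,11780134,11780139,5522117,3891570,5522117,11780139,11780134,5522102,3891532,5522026,11779919,11778621,5518341,3882373,5499792,11725979]),
([],[27445290,27558495,27558925,27558495,27445290,11438227,5290362,3702532,5306105,11483283,11484347,5309149,3710181,5309209,11484518,11484518,5309209,3710181,5309149,11484347,11483283,5306105,3702532,5290362,11438227],[27445290,27558495,27558927,27558927,27558495,27445290,11438227,5290362,3702532,5306105,11483283,11484347,5309149,3710181,5309209,11484519,11484523,5309221,3710210,5309221,11484523,11484519,5309209,3710181,5309149,11484347,11483283,5306105,3702532,5290362,11438227]),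
([],[27185476,27286417,27286782,27286417,27185476,11216515,5130963,3566548,5144788,11256349,11257257,5147406,3573180,5147456,11257401,11257401,5147456,3573180,5147406,11257257,11256349,5144788,3566548,5130963,11216515],[27185476,27286417,27286783,27286783,27286417,27185476,11216515,5130963,3566548,5144788,11256349,11257257,5147406,3573181,5147456,11257401,11257405,5147465,3573204,5147465,11257405,11257401,5147456,3573181,5147406,11257257,11256349,5144788,3566548,5130963,11216515]),
([],[26976737,27068749,27069067,27068749,26976737,11040106,5005373,3459969,5017820,11076165,11076965,5020137,3465880,5020180,11077090,11077090,5020180,3465880,5020137,11076965,11076165,5017820,3459969,5005373,11040106],[26976737,27068749,27069068,27069068,27068749,26976737,11040106,5005373,3459969,5017820,11076165,11076965,5020137,3465880,5020180,11077090,11077093,5020188,3465901,5020188,11077093,11077090,5020180,3465880,5020137,11076965,11076165,5017820,3459969,5005373,11040106]),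
([],[26805033,26890303,26890588,26890303,26805033,10896143,4903703,3374064,4915120,10929368,10930088,4917215,3379440,4917253,10930199,10930199,4917253,3379440,4917215,10930088,10929368,4915120,3374064,4903703,10896143],[26805033,26890303,26890589,26890589,26890303,26805033,10896143,4903703,3374064,4915120,10929368,10930088,4917215,3379440,4917253,10930199,10930201,4917260,3379458,4917260,10930201,10930199,4917253,3379440,4917215,10930088,10929368,4915120,3374064,4903703,10896143]),
([],[26661056,26741084,26741343,26741084,26661056,10776222,4819580,3303243,4830202,10807253,10807912,4832128,3308210,4832162,10808013,10808013,4832162,3308210,4832128,10807912,10807253,4830202,3303243,4819580,10776222],[26661056,26741084,26741344,26741344,26741084,26661056,10776222,4819580,3303243,4830202,10807253,10807912,4832128,3308210,4832163,10808013,10808015,4832169,3308226,4832169,10808015,10808013,4832163,3308210,4832128,10807912,10807253,4830202,3303243,4819580,10776222]),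
([],[26538381,26614235,26614475,26614235,26538381,10674616,4748712,3243767,4758705,10703906,10704518,4760498,3248411,4760530,10704610,10704610,4760530,3248411,4760498,10704518,10703906,4758705,3243767,4748712,10674616],[26538381,26614235,26614476,26614476,26614235,26538381,10674616,4748712,3243767,4758705,10703906,10704518,4760498,3248411,4760530,10704611,10704612,4760536,3248425,4760536,10704612,10704611,4760530,3248411,4760498,10704518,10703906,4758705,3243767,4748712,10674616]),
([],[26432433,26504895,26505119,26504895,26432433,10587287,4688101,3193035,4697586,10615165,10615739,4699272,3197419,4699302,10615825,10615825,4699302,3197419,4699272,10615739,10615165,4697586,3193035,4688101,10587287],[26432433,26504895,26505119,26505119,26504895,26432433,10587287,4688101,3193035,4697586,10615165,10615739,4699272,3197419,4699302,10615825,10615827,4699307,3197433,4699307,10615827,10615825,4699302,3197419,4699272,10615739,10615165,4697586,3193035,4688101,10587287])]"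

definition tb1 :: "lvl list" where "tb1 = [([],[26339858,26409516,26409727,26409516,26339858,10511301,4635591,3149187,4644656,10538015,10538558,4646256,3153358,4646283,10538639,10538639,4646283,3153358,4646256,10538558,10538015,4644656,3149187,4635591,10511301],[26339858,26409516,26409728,26409728,26409516,26339858,10511301,4635591,3149187,4644656,10538015,10538558,4646256,3153358,4646283,10538639,10538641,4646288,3153370,4646288,10538641,10538639,4646283,3153358,4646256,10538558,10538015,4644656,3149187,4635591,10511301]),
([],[26258147,26325452,26325653,26325452,26258147,10444480,4589588,3110852,4598303,10470219,10470736,4599830,3114846,4599856,10470813,10470813,4599856,3114846,4599830,10470736,10470219,4598303,3110852,4589588,10444480],[26258147,26325452,26325653,26325653,26325452,26258147,10444480,4589588,3110852,4598303,10470219,10470736,4599830,3114846,4599856,10470813,10470815,4599861,3114858,4599861,10470815,10470813,4599856,3114846,4599830,10470736,10470219,4598303,3110852,4589588,10444480]),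
([],[26185378,26250684,26250876,26250684,26185378,10385168,4548893,3077003,4557310,10410079,10410574,4558776,3080846,4558801,10410648,10410648,4558801,3080846,4558776,10410574,10410079,4557310,3077003,4548893,10385168],[26185378,26250684,26250876,26250876,26250684,26185378,10385168,4548893,3077003,4557310,10410079,10410574,4558776,3080847,4558801,10410648,10410649,4558805,3080858,4558805,10410649,10410648,4558801,3080847,4558776,10410574,10410079,4557310,3077003,4548893,10385168]),
([],[26120060,26183647,26183831,26183647,26120060,10332084,4512581,3046851,4520744,10356285,10356762,4522158,3050565,4522181,10356832,10356832,4522181,3050565,4522158,10356762,10356285,4520744,3046851,4512581,10332084],[26120060,26183647,26183832,26183832,26183647,26120060,10332084,4512581,3046851,4520744,10356285,10356762,4522158,3050565,4522181,10356832,10356833,4522186,3050576,4522186,10356833,10356832,4522181,3050565,4522158,10356762,10356285,4520744,3046851,4512581,10332084]),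
([],[26061012,26123107,26123285,26123107,26061012,10284225,4479933,3019780,4487874,10307809,10308270,4489243,3023384,4489266,10308337,10308337,4489266,3023384,4489243,10308270,10307809,4487874,3019780,4479933,10284225],[26061012,26123107,26123285,26123285,26123107,26061012,10284225,4479933,3019780,4487874,10307809,10308270,4489243,3023384,4489266,10308337,10308339,4489270,3023394,4489270,10308339,10308337,4489266,3023384,4489243,10308270,10307809,4487874,3019780,4479933,10284225]),
([],[26007291,26068080,26068251,26068080,26007291,10240788,4450375,2995306,4458123,10263832,10264279,4459452,2998813,4459474,10264344,10264344,4459474,2998813,4459452,10264279,10263832,4458123,2995306,4450375,10240788],[26007291,26068080,26068252,26068252,26068080,26007291,10240788,4450375,2995306,4458123,10263832,10264279,4459452,2998813,4459474,10264344,10264346,4459478,2998823,4459478,10264346,10264344,4459474,2998813,4459452,10264279,10263832,4458123,2995306,4450375,10240788]),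
([],[25958133,26017767,26017934,26017767,25958133,10201128,4423449,2973039,4431026,10223696,10224130,4432321,2976460,4432342,10224193,10224193,4432342,2976460,4432321,10224130,10223696,4431026,2973039,4423449,10201128],[25958133,26017767,26017935,26017935,26017767,25958133,10201128,4423449,2973039,4431026,10223696,10224130,4432321,2976460,4432342,10224193,10224195,4432345,2976469,4432345,10224195,10224193,4432342,2976460,4432321,10224130,10223696,4431026,2973039,4423449,10201128]),
([],[25912911,25971519,25971681,25971519,25912911,10164718,4398780,2952663,4406206,10186862,10187285,4407470,2956007,4407490,10187347,10187347,4407490,2956007,4407470,10187285,10186862,4406206,2952663,4398780,10164718],[25912911,25971519,25971682,25971682,25971519,25912911,10164718,4398780,2952663,4406206,10186862,10187285,4407470,2956007,4407490,10187347,10187348,4407494,2956017,4407494,10187348,10187347,4407490,2956007,4407470,10187285,10186862,4406206,2952663,4398780,10164718]),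
([],[25871107,25928797,25928955,25928797,25871107,10131123,4376063,2933918,4383353,10152887,10153301,4384589,2937195,4384609,10153361,10153361,4384609,2937195,4384589,10153301,10152887,4383353,2933918,4376063,10131123],[25871107,25928797,25928955,25928955,25928797,25871107,10131123,4376063,2933918,4383353,10152887,10153301,4384589,2937195,4384610,10153361,10153362,4384613,2937204,4384613,10153362,10153361,4384610,2937195,4384589,10153301,10152887,4383353,2933918,4376063,10131123]),
([],[25832291,25889152,25889307,25889152,25832291,10099983,4355044,2916592,4362212,10121405,10121810,4363423,2919807,4363442,10121869,10121869,4363442,2919807,4363423,10121810,10121405,4362212,2916592,4355044,10099983],[25832291,25889152,25889307,25889307,25889152,25832291,10099983,4355044,2916592,4362212,10121405,10121810,4363423,2919807,4363442,10121869,10121870,4363446,2919816,4363446,10121870,10121869,4363442,2919807,4363423,10121810,10121405,4362212,2916592,4355044,10099983]),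
([],[25796097,25852208,25852360,25852208,25796097,10070994,4335510,2900504,4342566,10092106,10092504,4343755,2903664,4343774,10092561,10092561,4343774,2903664,4343755,10092504,10092106,4342566,2900504,4335510,10070994],[25796097,25852208,25852360,25852360,25852208,25796097,10070994,4335510,2900504,4342566,10092106,10092504,4343755,2903664,4343774,10092561,10092562,4343777,2903672,4343777,10092562,10092561,4343774,2903664,4343755,10092504,10092106,4342566,2900504,4335510,10070994]),
([],[25762218,25817647,25817795,25817647,25762218,10043900,4317281,2885505,4324236,10064731,10065121,4325405,2888614,4325423,10065176,10065176,4325423,2888614,4325405,10065121,10064731,4324236,2885505,4317281,10043900],[25762218,25817647,25817796,25817796,25817647,25762218,10043900,4317281,2885505,4324236,10064731,10065121,4325405,2888614,4325423,10065177,10065178,4325427,2888622,4325427,10065178,10065177,4325423,2888614,4325405,10065121,10064731,4324236,2885505,4317281,10043900]),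
([],[25730392,25785195,25785341,25785195,25730392,10018483,4300205,2871466,4307069,10039056,10039439,4308218,2874529,4308237,10039494,10039494,4308237,2874529,4308218,10039439,10039056,4307069,2871466,4300205,10018483],[25730392,25785195,25785342,25785342,25785195,25730392,10018483,4300205,2871466,4307069,10039056,10039439,4308218,2874529,4308237,10039494,10039495,4308240,2874537,4308240,10039495,10039494,4308237,2874529,4308218,10039439,10039056,4307069,2871466,4300205,10018483]),
([],[25700391,25754621,25754764,25754621,25700391,9994557,4284153,2858278,4290932,10014892,10015270,4292064,2861299,4292082,10015323,10015323,4292082,2861299,4292064,10015270,10014892,4290932,2858278,4284153,9994557],[25700391,25754621,25754764,25754764,25754621,25700391,9994557,4284153,2858278,4290932,10014892,10015270,4292064,2861299,4292082,10015324,10015325,4292085,2861307,4292085,10015325,10015324,4292082,2861299,4292064,10015270,10014892,4290932,2858278,4284153,9994557]),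
([],[25672021,25725721,25725862,25725721,25672021,9971960,4269013,2845849,4275713,9992076,9992448,4276830,2848830,4276847,9992501,9992501,4276847,2848830,4276830,9992448,9992076,4275713,2845849,4269013,9971960],[25672021,25725721,25725863,25725863,25725721,25672021,9971960,4269013,2845849,4275713,9992076,9992448,4276830,2848830,4276847,9992501,9992502,4276850,2848838,4276850,9992502,9992501,4276847,2848830,4276830,9992448,9992076,4275713,2845849,4269013,9971960])]"

definition tb2 :: "lvl list" where "tb2 = [([],[25645112,25698322,25698461,25698322,25645112,9950552,4254688,2834097,4261315,9970465,9970832,4262417,2837041,4262434,9970884,9970884,4262434,2837041,4262417,9970832,9970465,4261315,2834097,4254688,9950552],[25645112,25698322,25698461,25698461,25698322,25645112,9950552,4254688,2834097,4261315,9970465,9970832,4262417,2837041,4262434,9970884,9970885,4262437,2837049,4262437,9970885,9970884,4262434,2837041,4262417,9970832,9970465,4261315,2834097,4254688,9950552]),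
([],[25619516,25672269,25672406,25672269,25619516,9930212,4241092,2822951,4247652,9949936,9950298,4248740,2825862,4248757,9950349,9950349,4248757,2825862,4248740,9950298,9949936,4247652,2822951,4241092,9930212],[25619516,25672269,25672407,25672407,25672269,25619516,9930212,4241092,2822951,4247652,9949936,9950298,4248740,2825862,4248757,9950350,9950351,4248760,2825869,4248760,9950351,9950350,4248757,2825862,4248740,9950298,9949936,4247652,2822951,4241092,9930212]),
([],[25595102,25647430,25647565,25647430,25595102,9910832,4228154,2812350,4234650,9930380,9930738,4235726,2815229,4235743,9930788,9930788,4235743,2815229,4235726,9930738,9930380,4234650,2812350,4228154,9910832],[25595102,25647430,25647566,25647566,25647430,25595102,9910832,4228154,2812350,4234650,9930380,9930738,4235726,2815229,4235743,9930789,9930789,4235746,2815237,4235746,9930789,9930789,4235743,2815229,4235726,9930738,9930380,4234650,2812350,4228154,9910832]),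
([],[25571755,25623686,25623819,25623686,25571755,9892319,4215807,2802240,4222244,9911702,9912056,4223308,2805090,4223325,9912105,9912105,4223325,2805090,4223308,9912056,9911702,4222244,2802240,4215807,9892319],[25571755,25623686,25623819,25623819,25623686,25571755,9892319,4215807,2802240,4222244,9911702,9912056,4223308,2805090,4223325,9912106,9912106,4223327,2805097,4223327,9912106,9912106,4223325,2805090,4223308,9912056,9911702,4222244,2802240,4215807,9892319]),
([],[25549373,25600931,25601063,25600931,25549373,9874588,4203995,2792573,4210377,9893817,9894167,4211429,2795395,4211445,9894216,9894216,4211445,2795395,4211429,9894167,9893817,4210377,2792573,4203995,9874588],[25549373,25600931,25601063,25601063,25600931,25549373,9874588,4203995,2792573,4210377,9893817,9894167,4211429,2795395,4211445,9894216,9894217,4211448,2795402,4211448,9894217,9894216,4211445,2795395,4211429,9894167,9893817,4210377,2792573,4203995,9874588]),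
([],[25527866,25579072,25579203,25579072,25527866,9857567,4192666,2783307,4198995,9876650,9876996,4200037,2786103,4200054,9877044,9877044,4200054,2786103,4200037,9876996,9876650,4198995,2783307,4192666,9857567],[25527866,25579072,25579203,25579203,25579072,25527866,9857567,4192666,2783307,4198995,9876650,9876996,4200037,2786103,4200054,9877045,9877045,4200056,2786110,4200056,9877045,9877045,4200054,2786103,4200037,9876996,9876650,4198995,2783307,4192666,9857567]),
([],[25507152,25558027,25558156,25558027,25507152,9841189,4181776,2774404,4188056,9860134,9860476,4189088,2777175,4189103,9860524,9860524,4189103,2777175,4189088,9860476,9860134,4188056,2774404,4181776,9841189],[25507152,25558027,25558156,25558156,25558027,25507152,9841189,4181776,2774404,4188056,9860134,9860476,4189088,2777175,4189103,9860524,9860525,4189106,2777182,4189106,9860525,9860524,4189103,2777175,4189088,9860476,9860134,4188056,2774404,4181776,9841189]),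
([],[25487159,25537719,25537847,25537719,25487159,9825394,4171283,2765831,4177516,9844209,9844548,4178538,2768579,4178554,9844595,9844595,4178554,2768579,4178538,9844548,9844209,4177516,2765831,4171283,9825394],[25487159,25537719,25537847,25537847,25537719,25487159,9825394,4171283,2765831,4177516,9844209,9844548,4178538,2768579,4178554,9844595,9844596,4178557,2768586,4178557,9844596,9844595,4178554,2768579,4178538,9844548,9844209,4177516,2765831,4171283,9825394]),
([],[25467819,25518082,25518209,25518082,25467819,9810129,4161151,2757557,4167340,9828820,9829156,4168353,2760282,4168369,9829203,9829203,4168369,2760282,4168353,9829156,9828820,4167340,2757557,4161151,9810129],[25467819,25518082,25518209,25518209,25518082,25467819,9810129,4161151,2757557,4167340,9828820,9829156,4168353,2760282,4168369,9829203,9829204,4168371,2760289,4168371,9829204,9829203,4168369,2760282,4168353,9829156,9828820,4167340,2757557,4161151,9810129]),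
([],[25449074,25499055,25499180,25499055,25449074,9795346,4151348,2749555,4157494,9813919,9814252,4158499,2752259,4158514,9814298,9814298,4158514,2752259,4158499,9814252,9813919,4157494,2749555,4151348,9795346],[25449074,25499055,25499180,25499180,25499055,25449074,9795346,4151348,2749555,4157494,9813919,9814252,4158499,2752259,4158514,9814298,9814299,4158517,2752265,4158517,9814299,9814298,4158514,2752259,4158499,9814252,9813919,4157494,2749555,4151348,9795346]),
([],[25430870,25480581,25480705,25480581,25430870,9781000,4141842,2741799,4147948,9799462,9799791,4148945,2744483,4148960,9799837,9799837,4148960,2744483,4148945,9799791,9799462,4147948,2741799,4141842,9781000],[25430870,25480581,25480705,25480705,25480581,25430870,9781000,4141842,2741799,4147948,9799462,9799791,4148945,2744483,4148960,9799837,9799838,4148963,2744490,4148963,9799838,9799837,4148960,2744483,4148945,9799791,9799462,4147948,2741799,4141842,9781000]),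
([],[25413156,25462610,25462733,25462610,25413156,9767053,4132608,2734269,4138675,9785406,9785733,4139664,2736933,4139679,9785779,9785779,4139679,2736933,4139664,9785733,9785406,4138675,2734269,4132608,9767053],[25413156,25462610,25462733,25462733,25462610,25413156,9767053,4132608,2734269,4138675,9785406,9785733,4139664,2736933,4139679,9785779,9785780,4139682,2736940,4139682,9785780,9785779,4139679,2736933,4139664,9785733,9785406,4138675,2734269,4132608,9767053]),
([],[25395888,25445096,25445217,25445096,25395888,9753466,4123620,2726942,4129650,9771717,9772041,4130632,2729588,4130647,9772086,9772086,4130647,2729588,4130632,9772041,9771717,4129650,2726942,4123620,9753466],[25395888,25445096,25445218,25445218,25445096,25395888,9753466,4123620,2726942,4129650,9771717,9772041,4130632,2729588,4130647,9772087,9772087,4130649,2729595,4130649,9772087,9772087,4130647,2729588,4130632,9772041,9771717,4129650,2726942,4123620,9753466]),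
([],[25379023,25427995,25428116,25427995,25379023,9740207,4114856,2719801,4120850,9758359,9758681,4121824,2722429,4121839,9758726,9758726,4121839,2722429,4121824,9758681,9758359,4120850,2719801,4114856,9740207],[25379023,25427995,25428116,25428116,25427995,25379023,9740207,4114856,2719801,4120850,9758359,9758681,4121824,2722429,4121839,9758726,9758726,4121842,2722435,4121842,9758726,9758726,4121839,2722429,4121824,9758681,9758359,4120850,2719801,4114856,9740207]),
([],[25362523,25411268,25411388,25411268,25362523,9727244,4106293,2712827,4112254,9745301,9745621,4113221,2715438,4113236,9745665,9745665,4113236,2715438,4113221,9745621,9745301,4112254,2712827,4106293,9727244],[25362523,25411268,25411388,25411388,25411268,25362523,9727244,4106293,2712827,4112254,9745301,9745621,4113221,2715438,4113236,9745665,9745666,4113238,2715445,4113238,9745666,9745665,4113236,2715438,4113221,9745621,9745301,4112254,2712827,4106293,9727244])]"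

definition tb3 :: "lvl list" where "tb3 = [([],[25346352,25394879,25394998,25394879,25346352,9714548,4097914,2706006,4103842,9732514,9732831,4104802,2708600,4104817,9732875,9732875,4104817,2708600,4104802,9732831,9732514,4103842,2706006,4097914,9714548],[25346352,25394879,25394998,25394998,25394879,25346352,9714548,4097914,2706006,4103842,9732514,9732831,4104802,2708600,4104817,9732875,9732876,4104819,2708606,4104819,9732876,9732875,4104817,2708600,4104802,9732831,9732514,4103842,2706006,4097914,9714548]),
([],[25330476,25378793,25378911,25378793,25330476,9702093,4089699,2699321,4095595,9719971,9720286,4096549,2701899,4096564,9720330,9720330,4096564,2701899,4096549,9720286,9719971,4095595,2699321,4089699,9702093],[25330476,25378793,25378911,25378911,25378793,25330476,9702093,4089699,2699321,4095595,9719971,9720286,4096549,2701899,4096564,9720330,9720330,4096566,2701905,4096566,9720330,9720330,4096564,2701899,4096549,9720286,9719971,4095595,2699321,4089699,9702093]),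
([],[25314865,25362978,25363095,25362978,25314865,9689854,4081633,2692759,4087498,9707647,9707959,4088446,2695322,4088460,9708002,9708002,4088460,2695322,4088446,9707959,9707647,4087498,2692759,4081633,9689854],[25314865,25362978,25363096,25363096,25362978,25314865,9689854,4081633,2692759,4087498,9707647,9707959,4088446,2695322,4088460,9708002,9708003,4088462,2695328,4088462,9708003,9708002,4088460,2695322,4088446,9707959,9707647,4087498,2692759,4081633,9689854]),
([],[25299487,25347405,25347521,25347405,25299487,9677806,4073698,2686307,4079533,9695517,9695827,4080475,2688855,4080489,9695870,9695870,4080489,2688855,4080475,9695827,9695517,4079533,2686307,4073698,9677806],[25299487,25347405,25347521,25347521,25347405,25299487,9677806,4073698,2686307,4079533,9695517,9695827,4080475,2688855,4080489,9695870,9695871,4080492,2688861,4080492,9695871,9695870,4080489,2688855,4080475,9695827,9695517,4079533,2686307,4073698,9677806]),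
([],[25284316,25332043,25332158,25332043,25284316,9665928,4065881,2679953,4071687,9683559,9683867,4072623,2682486,4072637,9683909,9683909,4072637,2682486,4072623,9683867,9683559,4071687,2679953,4065881,9665928],[25284316,25332043,25332159,25332159,25332043,25284316,9665928,4065881,2679953,4071687,9683559,9683867,4072623,2682486,4072637,9683909,9683910,4072639,2682492,4072639,9683910,9683909,4072637,2682486,4072623,9683867,9683559,4071687,2679953,4065881,9665928]),
([],[25269324,25316867,25316982,25316867,25269324,9654199,4058167,2673685,4063945,9671751,9672058,4064875,2676204,4064889,9672100,9672100,4064889,2676204,4064875,9672058,9671751,4063945,2673685,4058167,9654199],[25269324,25316867,25316982,25316982,25316867,25269324,9654199,4058167,2673685,4063945,9671751,9672058,4064875,2676204,4064889,9672100,9672101,4064891,2676210,4064891,9672101,9672100,4064889,2676204,4064875,9672058,9671751,4063945,2673685,4058167,9654199]),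
([],[25254487,25301851,25301964,25301851,25254487,9642598,4050542,2667492,4056293,9660075,9660379,4057217,2669997,4057231,9660421,9660421,4057231,2669997,4057217,9660379,9660075,4056293,2667492,4050542,9642598],[25254487,25301851,25301964,25301964,25301851,25254487,9642598,4050542,2667492,4056293,9660075,9660379,4057217,2669997,4057231,9660421,9660421,4057233,2670003,4057233,9660421,9660421,4057231,2669997,4057217,9660379,9660075,4056293,2667492,4050542,9642598]),
([],[25239779,25286969,25287082,25286969,25239779,9631105,4042994,2661364,4048718,9648509,9648811,4049637,2663856,4049650,9648852,9648852,4049650,2663856,4049637,9648811,9648509,4048718,2661364,4042994,9631105],[25239779,25286969,25287082,25287082,25286969,25239779,9631105,4042994,2661364,4048718,9648509,9648811,4049637,2663856,4049650,9648853,9648853,4049653,2663862,4049653,9648853,9648853,4049650,2663856,4049637,9648811,9648509,4048718,2661364,4042994,9631105]),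
([],[25225178,25272198,25272310,25272198,25225178,9619704,4035510,2655291,4041208,9637035,9637335,4042122,2657769,4042135,9637376,9637376,4042135,2657769,4042122,9637335,9637035,4041208,2655291,4035510,9619704],[25225178,25272198,25272310,25272310,25272198,25225178,9619704,4035510,2655291,4041208,9637035,9637335,4042122,2657769,4042135,9637377,9637377,4042137,2657775,4042137,9637377,9637377,4042135,2657769,4042122,9637335,9637035,4041208,2655291,4035510,9619704]),
([],[25210660,25257514,25257625,25257514,25210660,9608374,4028079,2649262,4033751,9625635,9625933,4034659,2651727,4034673,9625974,9625974,4034673,2651727,4034659,9625933,9625635,4033751,2649262,4028079,9608374],[25210660,25257514,25257625,25257625,25257514,25210660,9608374,4028079,2649262,4033751,9625635,9625933,4034659,2651727,4034673,9625974,9625975,4034675,2651733,4034675,9625975,9625974,4034673,2651727,4034659,9625933,9625635,4033751,2649262,4028079,9608374]),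
([],[25196203,25242895,25243005,25242895,25196203,9597099,4020688,2643268,4026336,9614291,9614588,4027239,2645721,4027252,9614628,9614628,4027252,2645721,4027239,9614588,9614291,4026336,2643268,4020688,9597099],[25196203,25242895,25243005,25243005,25242895,25196203,9597099,4020688,2643268,4026336,9614291,9614588,4027239,2645721,4027252,9614629,9614629,4027254,2645727,4027254,9614629,9614629,4027252,2645721,4027239,9614588,9614291,4026336,2643268,4020688,9597099]),
([],[25181784,25228318,25228428,25228318,25181784,9585861,4013327,2637301,4018950,9602986,9603281,4019848,2639741,4019861,9603321,9603321,4019861,2639741,4019848,9603281,9602986,4018950,2637301,4013327,9585861],[25181784,25228318,25228428,25228428,25228318,25181784,9585861,4013327,2637301,4018950,9602986,9603281,4019848,2639741,4019861,9603322,9603322,4019863,2639747,4019863,9603322,9603322,4019861,2639741,4019848,9603281,9602986,4018950,2637301,4013327,9585861]),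
([],[25167383,25213761,25213870,25213761,25167383,9574644,4005984,2631350,4011583,9591703,9591996,4012476,2633778,4012489,9592036,9592036,4012489,2633778,4012476,9591996,9591703,4011583,2631350,4005984,9574644],[25167383,25213761,25213870,25213870,25213761,25167383,9574644,4005984,2631350,4011583,9591703,9591996,4012476,2633778,4012489,9592036,9592037,4012491,2633784,4012491,9592037,9592036,4012489,2633778,4012476,9591996,9591703,4011583,2631350,4005984,9574644]),
([],[25152976,25199203,25199311,25199203,25152976,9563430,3998648,2625408,4004223,9580424,9580715,4005112,2627824,4005125,9580755,9580755,4005125,2627824,4005112,9580715,9580424,4004223,2625408,3998648,9563430],[25152976,25199203,25199311,25199311,25199203,25152976,9563430,3998648,2625408,4004223,9580424,9580715,4005112,2627824,4005125,9580755,9580756,4005127,2627830,4005127,9580756,9580755,4005125,2627824,4005112,9580715,9580424,4004223,2625408,3998648,9563430]),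
([],[25138543,25184621,25184728,25184621,25138543,9552203,3991309,2619464,3996860,9569133,9569422,3997744,2621868,3997757,9569462,9569462,3997757,2621868,3997744,9569422,9569133,3996860,2619464,3991309,9552203],[25138543,25184621,25184729,25184729,25184621,25138543,9552203,3991309,2619464,3996860,9569133,9569422,3997744,2621868,3997757,9569462,9569463,3997759,2621874,3997759,9569463,9569462,3997757,2621868,3997744,9569422,9569133,3996860,2619464,3991309,9552203])]"

definition tb4 :: "lvl list" where "tb4 = [([],[25124062,25169993,25170100,25169993,25124062,9540945,3983954,2613511,3989483,9557812,9558100,3990361,2615903,3990374,9558139,9558139,3990374,2615903,3990361,9558100,9557812,3989483,2613511,3983954,9540945],[25124062,25169993,25170100,25170100,25169993,25124062,9540945,3983954,2613511,3989483,9557812,9558100,3990361,2615903,3990374,9558140,9558140,3990376,2615909,3990376,9558140,9558140,3990374,2615903,3990361,9558100,9557812,3989483,2613511,3983954,9540945]),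
([],[25109510,25155297,25155404,25155297,25109510,9529640,3976573,2607539,3982079,9546445,9546731,3982953,2609919,3982966,9546770,9546770,3982966,2609919,3982953,9546731,9546445,3982079,2607539,3976573,9529640],[25109510,25155297,25155404,25155404,25155297,25109510,9529640,3976573,2607539,3982079,9546445,9546731,3982953,2609919,3982966,9546770,9546771,3982968,2609925,3982968,9546771,9546770,3982966,2609919,3982953,9546731,9546445,3982079,2607539,3976573,9529640]),
([],[25094866,25140511,25140616,25140511,25094866,9518269,3969155,2601538,3974638,9535014,9535298,3975507,2603908,3975520,9535337,9535337,3975520,2603908,3975507,9535298,9535014,3974638,2601538,3969155,9518269],[25094866,25140511,25140617,25140617,25140511,25094866,9518269,3969155,2601538,3974638,9535014,9535298,3975507,2603908,3975520,9535337,9535338,3975522,2603913,3975522,9535338,9535337,3975520,2603908,3975507,9535298,9535014,3974638,2601538,3969155,9518269]),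
([],[25080105,25125610,25125715,25125610,25080105,9506816,3961687,2595501,3967149,9523500,9523783,3968013,2597859,3968026,9523822,9523822,3968026,2597859,3968013,9523783,9523500,3967149,2595501,3961687,9506816],[25080105,25125610,25125715,25125715,25125610,25080105,9506816,3961687,2595501,3967149,9523500,9523783,3968013,2597859,3968026,9523822,9523822,3968028,2597864,3968028,9523822,9523822,3968026,2597859,3968013,9523783,9523500,3967149,2595501,3961687,9506816]),
([],[25065204,25110571,25110676,25110571,25065204,9495262,3954160,2589416,3959599,9511886,9512168,3960459,2591763,3960471,9512206,9512206,3960471,2591763,3960459,9512168,9511886,3959599,2589416,3954160,9495262],[25065204,25110571,25110676,25110676,25110571,25065204,9495262,3954160,2589416,3959599,9511886,9512168,3960459,2591763,3960471,9512206,9512207,3960473,2591768,3960473,9512207,9512206,3960471,2591763,3960459,9512168,9511886,3959599,2589416,3954160,9495262]),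
([],[25050139,25095370,25095473,25095370,25050139,9483588,3946559,2583275,3951976,9500153,9500433,3952832,2585611,3952844,9500471,9500471,3952844,2585611,3952832,9500433,9500153,3951976,2583275,3946559,9483588],[25050139,25095370,25095474,25095474,25095370,25050139,9483588,3946559,2583275,3951976,9500153,9500433,3952832,2585611,3952844,9500471,9500472,3952846,2585616,3952846,9500472,9500471,3952844,2585611,3952832,9500433,9500153,3951976,2583275,3946559,9483588]),
([],[25034883,25079979,25080082,25079979,25034883,9471775,3938872,2577068,3944268,9488281,9488559,3945119,2579392,3945132,9488597,9488597,3945132,2579392,3945119,9488559,9488281,3944268,2577068,3938872,9471775],[25034883,25079979,25080083,25080083,25079979,25034883,9471775,3938872,2577068,3944268,9488281,9488559,3945119,2579392,3945132,9488597,9488598,3945134,2579398,3945134,9488598,9488597,3945132,2579392,3945119,9488559,9488281,3944268,2577068,3938872,9471775]),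
([],[25019409,25064373,25064476,25064373,25019409,9459801,3931087,2570783,3936462,9476249,9476526,3937308,2573096,3937320,9476563,9476563,3937320,2573096,3937308,9476526,9476249,3936462,2570783,3931087,9459801],[25019409,25064373,25064476,25064476,25064373,25019409,9459801,3931087,2570783,3936462,9476249,9476526,3937308,2573096,3937320,9476563,9476564,3937322,2573102,3937322,9476564,9476563,3937320,2573096,3937308,9476526,9476249,3936462,2570783,3931087,9459801]),
([],[25003690,25048523,25048625,25048523,25003690,9447645,3923190,2564410,3928543,9464036,9464311,3929385,2566712,3929397,9464348,9464348,3929397,2566712,3929385,9464311,9464036,3928543,2564410,3923190,9447645],[25003690,25048523,25048625,25048625,25048523,25003690,9447645,3923190,2564410,3928543,9464036,9464311,3929385,2566712,3929397,9464348,9464349,3929399,2566718,3929399,9464349,9464348,3929397,2566712,3929385,9464311,9464036,3928543,2564410,3923190,9447645]),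
([],[24987695,25032398,25032499,25032398,24987695,9435285,3915165,2557937,3920497,9451619,9451892,3921335,2560229,3921347,9451929,9451929,3921347,2560229,3921335,9451892,9451619,3920497,2557937,3915165,9435285],[24987695,25032398,25032499,25032499,25032398,24987695,9435285,3915165,2557937,3920497,9451619,9451892,3921335,2560229,3921347,9451929,9451930,3921348,2560234,3921348,9451930,9451929,3921347,2560229,3921335,9451892,9451619,3920497,2557937,3915165,9435285]),
([],[24971392,25015967,25016067,25015967,24971392,9422696,3906998,2551353,3912309,9438973,9439245,3913142,2553633,3913154,9439281,9439281,3913154,2553633,3913142,9439245,9438973,3912309,2551353,3906998,9422696],[24971392,25015967,25016068,25016068,25015967,24971392,9422696,3906998,2551353,3912309,9438973,9439245,3913142,2553633,3913154,9439282,9439282,3913156,2553638,3913156,9439282,9439282,3913154,2553633,3913142,9439245,9438973,3912309,2551353,3906998,9422696]),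
([],[24954748,24999195,24999295,24999195,24954748,9409852,3898672,2544643,3903962,9426073,9426343,3904791,2546912,3904802,9426380,9426380,3904802,2546912,3904791,9426343,9426073,3903962,2544643,3898672,9409852],[24954748,24999195,24999295,24999295,24999195,24954748,9409852,3898672,2544643,3903962,9426073,9426343,3904791,2546912,3904802,9426380,9426380,3904804,2546917,3904804,9426380,9426380,3904802,2546912,3904791,9426343,9426073,3903962,2544643,3898672,9409852]),
([],[24937725,24982046,24982146,24982046,24937725,9396727,3890170,2537794,3895439,9412891,9413160,3896263,2540052,3896275,9413196,9413196,3896275,2540052,3896263,9413160,9412891,3895439,2537794,3890170,9396727],[24937725,24982046,24982146,24982146,24982046,24937725,9396727,3890170,2537794,3895439,9412891,9413160,3896263,2540052,3896275,9413196,9413196,3896277,2540057,3896277,9413196,9413196,3896275,2540052,3896263,9413160,9412891,3895439,2537794,3890170,9396727]),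
([],[24920284,24964481,24964580,24964481,24920284,9383289,3881473,2530791,3886721,9399398,9399665,3887540,2533038,3887552,9399701,9399701,3887552,2533038,3887540,9399665,9399398,3886721,2530791,3881473,9383289],[24920284,24964481,24964580,24964580,24964481,24920284,9383289,3881473,2530791,3886721,9399398,9399665,3887540,2533038,3887552,9399701,9399701,3887554,2533043,3887554,9399701,9399701,3887552,2533038,3887540,9399665,9399398,3886721,2530791,3881473,9383289]),
([],[24902384,24946457,24946555,24946457,24902384,9369508,3872561,2523618,3877788,9385561,9385826,3878603,2525854,3878614,9385862,9385862,3878614,2525854,3878603,9385826,9385561,3877788,2523618,3872561,9369508],[24902384,24946457,24946555,24946555,24946457,24902384,9369508,3872561,2523618,3877788,9385561,9385826,3878603,2525854,3878614,9385862,9385862,3878616,2525859,3878616,9385862,9385862,3878614,2525854,3878603,9385826,9385561,3877788,2523618,3872561,9369508])]"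

definition tb5 :: "lvl list" where "tb5 = [([],[24883976,24927927,24928024,24927927,24883976,9355348,3863412,2516257,3868618,9371345,9371609,3869428,2518483,3869439,9371644,9371644,3869439,2518483,3869428,9371609,9371345,3868618,2516257,3863412,9355348],[24883976,24927927,24928025,24928025,24927927,24883976,9355348,3863412,2516257,3868618,9371345,9371609,3869428,2518483,3869439,9371644,9371645,3869441,2518487,3869441,9371645,9371644,3869439,2518483,3869428,9371609,9371345,3868618,2516257,3863412,9355348]),
([],[24865011,24908842,24908938,24908842,24865011,9340772,3854002,2508691,3859187,9356714,9356976,3859992,2510905,3860004,9357011,9357011,3860004,2510905,3859992,9356976,9356714,3859187,2508691,3854002,9340772],[24865011,24908842,24908939,24908939,24908842,24865011,9340772,3854002,2508691,3859187,9356714,9356976,3859992,2510905,3860004,9357011,9357011,3860005,2510910,3860005,9357011,9357011,3860004,2510905,3859992,9356976,9356714,3859187,2508691,3854002,9340772]),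
([],[24845434,24889146,24889242,24889146,24845434,9325737,3844305,2500898,3849469,9341625,9341885,3850270,2503101,3850281,9341920,9341920,3850281,2503101,3850270,9341885,9341625,3849469,2500898,3844305,9325737],[24845434,24889146,24889242,24889242,24889146,24845434,9325737,3844305,2500898,3849469,9341625,9341885,3850270,2503101,3850281,9341920,9341920,3850283,2503106,3850283,9341920,9341920,3850281,2503101,3850270,9341885,9341625,3849469,2500898,3844305,9325737]),
([],[24825184,24868778,24868873,24868778,24825184,9310200,3834292,2492856,3839436,9326033,9326291,3840232,2495048,3840243,9326326,9326326,3840243,2495048,3840232,9326291,9326033,3839436,2492856,3834292,9310200],[24825184,24868778,24868873,24868873,24868778,24825184,9310200,3834292,2492856,3839436,9326033,9326291,3840232,2495048,3840243,9326326,9326326,3840245,2495052,3840245,9326326,9326326,3840243,2495048,3840232,9326291,9326033,3839436,2492856,3834292,9310200]),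
([],[24804194,24847672,24847767,24847672,24804194,9294110,3823934,2484540,3829056,9309888,9310145,3829847,2486720,3829858,9310179,9310179,3829858,2486720,3829847,9310145,9309888,3829056,2484540,3823934,9294110],[24804194,24847672,24847767,24847767,24847672,24804194,9294110,3823934,2484540,3829056,9309888,9310145,3829847,2486720,3829859,9310179,9310180,3829860,2486725,3829860,9310180,9310179,3829859,2486720,3829847,9310145,9309888,3829056,2484540,3823934,9294110]),
([],[24782389,24825754,24825848,24825754,24782389,9277411,3813194,2475923,3818296,9293135,9293390,3819082,2478092,3819093,9293424,9293424,3819093,2478092,3819082,9293390,9293135,3818296,2475923,3813194,9277411],[24782389,24825754,24825848,24825848,24825754,24782389,9277411,3813194,2475923,3818296,9293135,9293390,3819082,2478092,3819093,9293424,9293425,3819095,2478097,3819095,9293425,9293424,3819093,2478092,3819082,9293390,9293135,3818296,2475923,3813194,9277411]),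
([],[24759687,24802941,24803034,24802941,24759687,9260042,3802035,2466975,3807116,9275713,9275966,3807898,2469133,3807909,9276000,9276000,3807909,2469133,3807898,9275966,9275713,3807116,2466975,3802035,9260042],[24759687,24802941,24803034,24803034,24802941,24759687,9260042,3802035,2466975,3807116,9275713,9275966,3807898,2469133,3807909,9276000,9276001,3807910,2469138,3807910,9276001,9276000,3807909,2469133,3807898,9275966,9275713,3807116,2466975,3802035,9260042]),
([],[24735995,24779142,24779234,24779142,24735995,9241935,3790415,2457663,3795475,9257553,9257805,3796252,2459809,3796262,9257838,9257838,3796262,2459809,3796252,9257805,9257553,3795475,2457663,3790415,9241935],[24735995,24779142,24779234,24779234,24779142,24735995,9241935,3790415,2457663,3795475,9257553,9257805,3796252,2459809,3796262,9257838,9257839,3796264,2459814,3796264,9257839,9257838,3796262,2459809,3796252,9257805,9257553,3795475,2457663,3790415,9241935]),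
([],[24711211,24754253,24754344,24754253,24711211,9223013,3778285,2447949,3783324,9238579,9238829,3784096,2450083,3784107,9238862,9238862,3784107,2450083,3784096,9238829,9238579,3783324,2447949,3778285,9223013],[24711211,24754253,24754345,24754345,24754253,24711211,9223013,3778285,2447949,3783324,9238579,9238829,3784096,2450083,3784107,9238862,9238863,3784109,2450088,3784109,9238863,9238862,3784107,2450083,3784096,9238829,9238579,3783324,2447949,3778285,9223013]),
([],[24685216,24728158,24728249,24728158,24685216,9203190,3765593,2437791,3770612,9218705,9218953,3771379,2439914,3771389,9218986,9218986,3771389,2439914,3771379,9218953,9218705,3770612,2437791,3765593,9203190],[24685216,24728158,24728249,24728249,24728158,24685216,9203190,3765593,2437791,3770612,9218705,9218953,3771379,2439914,3771389,9218986,9218986,3771391,2439918,3771391,9218986,9218986,3771389,2439914,3771379,9218953,9218705,3770612,2437791,3765593,9203190]),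
([],[24657879,24700727,24700817,24700727,24657879,9182369,3752278,2427142,3757276,9197833,9198079,3758038,2429254,3758049,9198112,9198112,3758049,2429254,3758038,9198079,9197833,3757276,2427142,3752278,9182369],[24657879,24700727,24700817,24700817,24700727,24657879,9182369,3752278,2427142,3757276,9197833,9198079,3758038,2429254,3758049,9198112,9198112,3758050,2429258,3758050,9198112,9198112,3758049,2429254,3758038,9198079,9197833,3757276,2427142,3752278,9182369]),
([],[24629050,24671809,24671898,24671809,24629050,9160438,3738273,2415950,3743251,9175853,9176098,3744008,2418050,3744018,9176130,9176130,3744018,2418050,3744008,9176098,9175853,3743251,2415950,3738273,9160438],[24629050,24671809,24671898,24671898,24671809,24629050,9160438,3738273,2415950,3743251,9175853,9176098,3744008,2418050,3744018,9176130,9176131,3744020,2418054,3744020,9176131,9176130,3744018,2418050,3744008,9176098,9175853,3743251,2415950,3738273,9160438]),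
([],[24598558,24641235,24641323,24641235,24598558,9137273,3723499,2404153,3728457,9152641,9152883,3729209,2406241,3729219,9152915,9152915,3729219,2406241,3729209,9152883,9152641,3728457,2404153,3723499,9137273],[24598558,24641235,24641323,24641323,24641235,24598558,9137273,3723499,2404153,3728457,9152641,9152883,3729209,2406241,3729219,9152915,9152916,3729221,2406245,3729221,9152916,9152915,3729219,2406241,3729209,9152883,9152641,3728457,2404153,3723499,9137273]),
([],[24566203,24608808,24608896,24608808,24566203,9112728,3707869,2391683,3712808,9128051,9128292,3713555,2393759,3713565,9128323,9128323,3713565,2393759,3713555,9128292,9128051,3712808,2391683,3707869,9112728],[24566203,24608808,24608896,24608896,24608808,24566203,9112728,3707869,2391683,3712808,9128051,9128292,3713555,2393759,3713565,9128323,9128324,3713566,2393763,3713566,9128324,9128323,3713565,2393759,3713555,9128292,9128051,3712808,2391683,3707869,9112728]),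
([],[24531760,24574304,24574391,24574304,24531760,9086637,3691281,2378460,3696201,9101919,9102157,3696943,2380525,3696953,9102188,9102188,3696953,2380525,3696943,9102157,9101919,3696201,2378460,3691281,9086637],[24531760,24574304,24574391,24574391,24574304,24531760,9086637,3691281,2378460,3696201,9101919,9102157,3696943,2380525,3696953,9102189,9102189,3696954,2380529,3696954,9102189,9102189,3696953,2380525,3696943,9102157,9101919,3696201,2378460,3691281,9086637])]"

definition tb6 :: "lvl list" where "tb6 = [([],[24494963,24537460,24537546,24537460,24494963,9058808,3673618,2364393,3678520,9074051,9074288,3679256,2366447,3679266,9074319,9074319,3679266,2366447,3679256,9074288,9074051,3678520,2364393,3673618,9058808],[24494963,24537460,24537546,24537546,24537460,24494963,9058808,3673618,2364393,3678520,9074051,9074288,3679256,2366447,3679266,9074319,9074320,3679268,2366451,3679268,9074320,9074319,3679266,2366447,3679256,9074288,9074051,3678520,2364393,3673618,9058808]),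
([],[24455503,24497970,24498055,24497970,24455503,9029017,3654743,2349377,3659628,9044226,9044461,3660359,2351419,3660369,9044492,9044492,3660369,2351419,3660359,9044461,9044226,3659628,2349377,3654743,9029017],[24455503,24497970,24498055,24498055,24497970,24455503,9029017,3654743,2349377,3659628,9044226,9044461,3660359,2351420,3660369,9044492,9044492,3660371,2351424,3660371,9044492,9044492,3660369,2351420,3660359,9044461,9044226,3659628,2349377,3654743,9029017]),
([],[24413017,24455475,24455559,24455475,24413017,8996999,3634497,2333289,3639367,9012181,9012414,3640093,2335320,3640103,9012444,9012444,3640103,2335320,3640093,9012414,9012181,3639367,2333289,3634497,8996999],[24413017,24455475,24455559,24455559,24455475,24413017,8996999,3634497,2333289,3639367,9012181,9012414,3640093,2335320,3640103,9012444,9012445,3640104,2335324,3640104,9012445,9012444,3640103,2335320,3640093,9012414,9012181,3639367,2333289,3634497,8996999]),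
([],[24367072,24409548,24409632,24409548,24367072,8962445,3612693,2315983,3617549,8977607,8977838,3618271,2318003,3618280,8977868,8977868,3618280,2318003,3618271,8977838,8977607,3617549,2315983,3612693,8962445],[24367072,24409548,24409632,24409632,24409548,24367072,8962445,3612693,2315983,3617549,8977607,8977838,3618271,2318003,3618280,8977868,8977868,3618281,2318007,3618281,8977868,8977868,3618280,2318003,3618271,8977838,8977607,3617549,2315983,3612693,8962445]),
([],[24317154,24359683,24359765,24359683,24317154,8924984,3589108,2297288,3593954,8940135,8940365,3594670,2299299,3594680,8940394,8940394,3594680,2299299,3594670,8940365,8940135,3593954,2297288,3589108,8924984],[24317154,24359683,24359765,24359765,24359683,24317154,8924984,3589108,2297288,3593954,8940135,8940365,3594670,2299299,3594680,8940394,8940394,3594681,2299303,3594681,8940394,8940394,3594680,2299299,3594670,8940365,8940135,3593954,2297288,3589108,8924984]),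
([],[24262643,24305267,24305348,24305267,24262643,8884173,3563479,2277001,3568317,8899326,8899553,3569029,2279003,3569038,8899582,8899582,3569038,2279003,3569029,8899553,8899326,3568317,2277001,3563479,8884173],[24262643,24305267,24305349,24305349,24305267,24262643,8884173,3563479,2277001,3568317,8899326,8899553,3569029,2279003,3569038,8899582,8899583,3569039,2279007,3569039,8899583,8899582,3569038,2279003,3569029,8899553,8899326,3568317,2277001,3563479,8884173]),
([],[24202785,24245558,24245639,24245558,24202785,8839474,3535485,2254877,3540320,8854646,8854871,3541027,2256872,3541036,8854900,8854900,3541036,2256872,3541027,8854871,8854646,3540320,2254877,3535485,8839474],[24202785,24245558,24245639,24245639,24245558,24202785,8839474,3535485,2254877,3540320,8854646,8854871,3541027,2256872,3541036,8854900,8854900,3541038,2256876,3541038,8854900,8854900,3541036,2256872,3541027,8854871,8854646,3540320,2254877,3535485,8839474]),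
([],[24136655,24179648,24179728,24179648,24136655,8790233,3504739,2230621,3509576,8805444,8805668,3510280,2232609,3510289,8805696,8805696,3510289,2232609,3510280,8805668,8805444,3509576,2230621,3504739,8790233],[24136655,24179648,24179728,24179728,24179648,24136655,8790233,3504739,2230621,3509576,8805444,8805668,3510280,2232610,3510289,8805696,8805696,3510290,2232613,3510290,8805696,8805696,3510289,2232610,3510280,8805668,8805444,3509576,2230621,3504739,8790233]),
([],[24063102,24106407,24106486,24106407,24063102,8735640,3470766,2203870,3475613,8750917,8751139,3476314,2205855,3476322,8751167,8751167,3476322,2205855,3476314,8751139,8750917,3475613,2203870,3470766,8735640],[24063102,24106407,24106486,24106486,24106407,24063102,8735640,3470766,2203870,3475613,8750917,8751139,3476314,2205855,3476322,8751167,8751168,3476324,2205859,3476324,8751168,8751167,3476322,2205855,3476314,8751139,8750917,3475613,2203870,3470766,8735640]),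
([],[23980684,24024421,24024499,24024421,23980684,8674684,3432976,2174178,3437843,8690064,8690285,3438541,2176163,3438550,8690312,8690312,3438550,2176163,3438541,8690285,8690064,3437843,2174178,3432976,8674684],[23980684,24024421,24024500,24024500,24024421,23980684,8674684,3432976,2174178,3437843,8690064,8690285,3438541,2176163,3438550,8690312,8690313,3438551,2176166,3438551,8690313,8690312,3438550,2176163,3438541,8690285,8690064,3437843,2174178,3432976,8674684]),
([],[23887558,23931888,23931966,23931888,23887558,8606085,3390629,2140987,3395529,8621617,8621836,3396226,2142976,3396235,8621864,8621864,3396235,2142976,3396226,8621836,8621617,3395529,2140987,3390629,8606085],[23887558,23931888,23931966,23931966,23931888,23887558,8606085,3390629,2140987,3395529,8621617,8621836,3396226,2142976,3396235,8621864,8621864,3396236,2142979,3396236,8621864,8621864,3396235,2142976,3396226,8621836,8621617,3395529,2140987,3390629,8606085]),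
([],[23781342,23826481,23826558,23826481,23781342,8528201,3342783,2103591,3347735,8543950,8544169,3348432,2105589,3348440,8544196,8544196,3348440,2105589,3348432,8544169,8543950,3347735,2103591,3342783,8528201],[23781342,23826481,23826558,23826558,23826481,23781342,8528201,3342783,2103591,3347735,8543950,8544169,3348432,2105589,3348440,8544196,8544197,3348441,2105593,3348441,8544197,8544196,3348440,2105589,3348432,8544169,8543950,3347735,2103591,3342783,8528201]),
([],[23658894,23705139,23705216,23705139,23658894,8438887,3288221,2061085,3293250,8454944,8455163,3293950,2063101,3293958,8455190,8455190,3293958,2063101,3293950,8455163,8454944,3293250,2061085,3288221,8438887],[23658894,23705139,23705216,23705216,23705139,23658894,8438887,3288221,2061085,3293250,8454944,8455163,3293950,2063101,3293958,8455190,8455190,3293959,2063104,3293959,8455190,8455190,3293958,2063101,3293950,8455163,8454944,3293250,2061085,3288221,8438887]),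
([],[23515990,23563757,23563834,23563757,23515990,8335291,3225347,2012287,3230487,8351782,8352002,3231193,2014332,3231201,8352029,8352029,3231201,2014332,3231193,8352002,8351782,3230487,2012287,3225347,8335291],[23515990,23563757,23563834,23563834,23563757,23515990,8335291,3225347,2012287,3230487,8351782,8352002,3231193,2014332,3231201,8352029,8352029,3231202,2014336,3231202,8352029,8352029,3231201,2014332,3231193,8352002,8351782,3230487,2012287,3225347,8335291]),
([],[23346813,23396696,23396773,23396696,23346813,8213537,3152020,1955634,3157322,8230642,8230864,3158039,1957724,3158047,8230890,8230890,3158047,1957724,3158039,8230864,8230642,3157322,1955634,3152020,8213537],[23346813,23396696,23396774,23396774,23396696,23346813,8213537,3152020,1955634,3157322,8230642,8230864,3158039,1957724,3158047,8230891,8230891,3158048,1957727,3158048,8230891,8230891,3158047,1957724,3158039,8230864,8230642,3157322,1955634,3152020,8213537])]"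

definition tb7 :: "lvl list" where "tb7 = [([],[23143132,23196003,23196081,23196003,23143132,8068224,3065316,1889008,3070851,8086204,8086430,3071585,1891167,3071593,8086457,8086457,3071593,1891167,3071585,8086430,8086204,3070851,1889008,3065316,8068224],[23143132,23196003,23196081,23196081,23196003,23143132,8068224,3065316,1889008,3070851,8086204,8086430,3071585,1891167,3071593,8086457,8086457,3071595,1891170,3071595,8086457,8086457,3071593,1891167,3071585,8086430,8086204,3070851,1889008,3065316,8068224]),
([],[22892905,22950087,22950166,22950087,22892905,7891604,2961130,1809485,2967005,7910851,7911083,2967765,1811745,2967773,7911110,7911110,2967773,1811745,2967765,7911083,7910851,2967005,1809485,2961130,7891604],[22892905,22950087,22950166,22950166,22950087,22892905,7891604,2961130,1809485,2967005,7910851,7911083,2967765,1811745,2967773,7911110,7911110,2967774,1811748,2967774,7911110,7911110,2967773,1811745,2967765,7911083,7910851,2967005,1809485,2961130,7891604]),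
([],[22577814,22641385,22641466,22641385,22577814,7672170,2833538,1712923,2839914,7693288,7693530,2840715,1715334,2840723,7693557,7693557,2840723,1715334,2840715,7693530,7693288,2839914,1712923,2833538,7672170],[22577814,22641385,22641466,22641466,22641385,22577814,7672170,2833538,1712923,2839914,7693288,7693530,2840715,1715334,2840723,7693557,7693557,2840724,1715337,2840724,7693557,7693557,2840723,1715334,2840715,7693530,7693288,2839914,1712923,2833538,7672170]),
([],[22168591,22241978,22242063,22241978,22168591,7392102,2673708,1593304,2680837,7416061,7416317,2681697,1595940,2681706,7416345,7416345,2681706,1595940,2681697,7416317,7416061,2680837,1593304,2673708,7392102],[22168591,22241978,22242063,22242063,22241978,22168591,7392102,2673708,1593304,2680837,7416061,7416317,2681697,1595940,2681706,7416345,7416345,2681707,1595943,2681707,7416345,7416345,2681706,1595940,2681697,7416317,7416061,2680837,1593304,2673708,7392102]),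
([],[21615509,21704700,21704789,21704700,21615509,7022369,2467980,1441665,2476268,7050792,7051068,2477215,1444637,2477223,7051097,7051097,2477223,1444637,2477215,7051068,7050792,2476268,1441665,2467980,7022369],[21615509,21704700,21704789,21704789,21704700,21615509,7022369,2467980,1441665,2476268,7050792,7051068,2477215,1444637,2477223,7051097,7051097,2477224,1444640,2477224,7051097,7051097,2477223,1444637,2477215,7051068,7050792,2476268,1441665,2467980,7022369]),
([],[20826996,20943254,20943348,20943254,20826996,6512594,2194407,1244426,2204520,6548344,6548645,2205586,1247892,2205594,6548674,6548674,2205594,1247892,2205586,6548645,6548344,2204520,1244426,2194407,6512594],[20826996,20943254,20943348,20943348,20943254,20826996,6512594,2194407,1244426,2204520,6548344,6548645,2205586,1247892,2205594,6548674,6548674,2205595,1247895,2205595,6548674,6548674,2205594,1247892,2205586,6548645,6548344,2204520,1244426,2194407,6512594]),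
([],[19614903,19781549,19781644,19781549,19614903,5768317,1816696,981431,1829711,5816673,5816998,1830916,985584,1830923,5817025,5817025,1830923,985584,1830916,5816998,5816673,1829711,981431,1816696,5768317],[19614903,19781549,19781644,19781644,19781549,19614903,5768317,1816696,981431,1829711,5816673,5816998,1830916,985584,1830923,5817025,5817026,1830924,985587,1830924,5817026,5817025,1830923,985584,1830916,5816998,5816673,1829711,981431,1816696,5768317]),
([],[17526410,17797628,17797709,17797628,17526410,4596006,1276988,628466,1294221,4666511,4666818,1295475,633293,1295481,4666839,4666839,1295481,633293,1295475,4666818,4666511,1294221,628466,1276988,4596006],[17526410,17797628,17797709,17797709,17797628,17526410,4596006,1276988,628466,1294221,4666511,4666818,1295475,633293,1295481,4666839,4666839,1295481,633294,1295481,4666839,4666839,1295481,633293,1295475,4666818,4666511,1294221,628466,1276988,4596006]),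
([],[13152718,13678810,13678840,13678810,13152718,2581468,525318,201955,544749,2684425,2684571,545524,205915,545525,2684577,2684577,545525,205915,545524,2684571,2684425,544749,201955,525318,2581468],[13152718,13678810,13678840,13678840,13678810,13152718,2581468,525318,201955,544749,2684425,2684571,545524,205915,545525,2684577,2684577,545525,205915,545525,2684577,2684577,545525,205915,545524,2684571,2684425,544749,201955,525318,2581468])]"

definition tbl :: "lvl list" where "tbl = tb0 @ tb1 @ tb2 @ tb3 @ tb4 @ tb5 @ tb6 @ tb7"



definition row :: "nat \<Rightarrow> lvl" where
  "row l = (if 1 \<le> l \<and> l \<le> length tbl then tbl ! (l - 1) else ([],[],[]))"
definition Nval :: "nat \<Rightarrow> nat \<Rightarrow> nat \<times> nat \<Rightarrow> int" where
  "Nval l k p = lk0 (cmpk (row l) k) (pidx k p)"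
definition cval :: "nat \<Rightarrow> elem \<Rightarrow> real" where
  "cval l e = (if velem e then real_of_int (Nval l (fst e) (snd (snd e))) / 2 ^ KK else 0)"

definition lamc :: real where "lamc = 52985 / 10000"

definition G :: "nat \<Rightarrow> elem \<Rightarrow> act \<Rightarrow> real" where
  "G l e a = (case a of InB e' \<Rightarrow> cval l e' | Pop \<Rightarrow> (if l = 1 then 0 else 1) | Push e2 \<Rightarrow> cval l e * cval (Suc l) e2)"

lemma chk_nth: "chk b xs \<Longrightarrow> n < length xs \<Longrightarrow>
   level_ok (b \<and> n = 0) (xs ! n) (if Suc n < length xs then xs ! Suc n else ([],[],[]))"
proof (induction b xs arbitrary: n rule: chk.induct)
  case (1 tp) then show ?case by simp
next
  case (2 tp a) then show ?case by simp
next
  case (3 tp a b r)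
  show ?case
  proof (cases n)
    case 0 then show ?thesis using 3 by simp
  next
    case (Suc m)
    have "level_ok (False \<and> m = 0) ((b # r) ! m) (if Suc m < length (b # r) then (b # r) ! Suc m else ([], [], []))"
      using 3 Suc by simp
    then show ?thesis using Suc by (cases "Suc m < length (b # r)") auto
  qed
qed

lemma ineq_empty: "ineq_ok tp ([],[],[]) b k p"
  by (simp add: ineq_ok_def cmpk_def lk0_def Let_def)

lemma level_row:
  assumes "chk True tbl" "1 \<le> l"
  shows "level_ok (l = 1) (row l) (row (Suc l))"
proof (cases "l \<le> length tbl")
  case True
  have "level_ok (True \<and> l - 1 = 0) (tbl ! (l - 1)) (if Suc (l - 1) < length tbl then tbl ! Suc (l - 1) else ([],[],[]))"
    by (rule chk_nth[OF assms(1)]) (use True assms(2) in simp)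
  moreover have "(True \<and> l - 1 = 0) = (l = 1)" using assms(2) by auto
  moreover have "row (Suc l) = (if Suc (l - 1) < length tbl then tbl ! Suc (l - 1) else ([],[],[]))"
    using assms(2) by (auto simp: row_def)
  moreover have "row l = tbl ! (l - 1)" using True assms(2) by (simp add: row_def)
  ultimately show ?thesis by simp
next
  case False
  then have "row l = ([],[],[])" by (simp add: row_def)
  then show ?thesis by (simp add: level_ok_def list_all_iff ineq_empty)
qed

lemma velem_pos: "velem (k,r,i,j) \<Longrightarrow> (i,j) \<in> set (positions k)"
  by (auto simp: velem_def positions_def image_iff Bex_def)

lemma velem_k: "velem (k,r,i,j) \<Longrightarrow> k \<in> set [4,5,7]"
  by (auto simp: velem_def)

lemma ineq_at:
  assumes "chk True tbl" "1 \<le> l" "velem (k,r,i,j)"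
  shows "ineq_ok (l = 1) (row l) (row (Suc l)) k (i,j)"
  using level_row[OF assms(1,2)] velem_pos[OF assms(3)] velem_k[OF assms(3)]
  unfolding level_ok_def list_all_iff by blast

lemma Nval_nonneg:
  assumes "chk True tbl" "velem (k,r,i,j)"
  shows "0 \<le> Nval l k (i,j)"
proof (cases "1 \<le> l")
  case True
  then show ?thesis using ineq_at[OF assms(1) True assms(2)] by (simp add: ineq_ok_def Let_def Nval_def)
next
  case False
  then show ?thesis by (simp add: Nval_def row_def cmpk_def lk0_def)
qed

lemma cval_nonneg: "chk True tbl \<Longrightarrow> 0 \<le> cval l e"
  by (cases e) (auto simp: cval_def intro!: divide_nonneg_pos dest: Nval_nonneg)


lemma mod_back: "(r::nat) < 8 \<Longrightarrow> i < 8 \<Longrightarrow> ((r + i) mod 8 + 8 - r) mod 8 = i"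
proof -
  assume r: "r < 8" and i: "i < 8"
  have "(r + i) mod 8 + 8 - r = (r+i) mod 8 + (8 - r)" using r by simp
  then have "((r + i) mod 8 + 8 - r) mod 8 = ((r + i) + (8 - r)) mod 8" by (simp add: mod_add_left_eq)
  also have "(r + i) + (8 - r) = i + 8" using r by simp
  finally show ?thesis using i by simp
qed

lemma sum_split:
  assumes ve: "velem e"
  shows "(\<Sum>s\<in>UNIV. H (act e s)) = sum_list (map (\<lambda>p. H (snd p)) (inblock e))
     + (\<Sum>t2\<in>{0..<Suc (fst (child_blk e))}. H (Push (fst (child_blk e), snd (child_blk e), t2, 0)))"
proof -
  define U where "U = set (ulist e)"
  define k2 where "k2 = fst (child_blk e)"
  define r2 where "r2 = snd (child_blk e)"
  have r2: "r2 < 8" unfolding r2_def by (rule velem_child(2)[OF ve])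
  have k2: "k2 < 8" unfolding k2_def using velem_child(1)[OF ve] by auto
  have "(\<Sum>s\<in>UNIV. H (act e s)) = (\<Sum>s\<in>UNIV - U. H (act e s)) + (\<Sum>s\<in>U. H (act e s))"
    by (rule sum.subset_diff) auto
  moreover have "(\<Sum>s\<in>U. H (act e s)) = sum_list (map (\<lambda>p. H (snd p)) (inblock e))"
  proof -
    have "(\<Sum>s\<in>U. H (act e s)) = sum_list (map (\<lambda>s. H (act e s)) (ulist e))"
      unfolding U_def by (rule sum.distinct_set_conv_list) (use distinct_ulist[OF ve] in \<open>simp add: ulist_def\<close>)
    also have "\<dots> = sum_list (map (\<lambda>p. H (act e (fst p))) (inblock e))" by (simp add: ulist_def comp_def)
    also have "\<dots> = sum_list (map (\<lambda>p. H (snd p)) (inblock e))"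
      by (rule arg_cong[where f=sum_list], rule map_cong) (auto simp: act_in[OF ve])
    finally show ?thesis .
  qed
  moreover have "(\<Sum>s\<in>UNIV - U. H (act e s)) = (\<Sum>t2\<in>{0..<Suc k2}. H (Push (k2, r2, t2, 0)))"
  proof -
    have "(\<Sum>s\<in>UNIV - U. H (act e s)) = (\<Sum>s\<in>UNIV - U. H (Push (entry (child_blk e) s)))"
      by (rule sum.cong) (auto simp: U_def act_out)
    also have "\<dots> = (\<Sum>t2\<in>{0..<Suc k2}. H (Push (k2, r2, t2, 0)))"
    proof (rule sum.reindex_bij_witness[where i = "\<lambda>t2. link (r2 + t2)" and j = "\<lambda>t. (lidx t + 8 - r2) mod 8"])
      fix a assume "a \<in> UNIV - U"
      then show "link (r2 + (lidx a + 8 - r2) mod 8) = a" using link_lidx_mod[OF r2] by simp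
      show "(lidx a + 8 - r2) mod 8 \<in> {0..<Suc k2}"
        using \<open>a \<in> UNIV - U\<close> notin_iff[OF ve, of a] unfolding U_def k2_def r2_def by auto
      show "H (Push (k2, r2, (lidx a + 8 - r2) mod 8, 0)) = H (Push (entry (child_blk e) a))"
        by (simp add: entry_def k2_def r2_def)
    next
      fix b assume b: "b \<in> {0..<Suc k2}"
      have bb: "(lidx (link (r2 + b)) + 8 - r2) mod 8 = b"
        using b k2 r2 by (simp add: lidx_link mod_back)
      then show "(lidx (link (r2 + b)) + 8 - r2) mod 8 = b" .
      show "link (r2 + b) \<in> UNIV - U"
        using notin_iff[OF ve, of "link (r2 + b)"] bb b unfolding U_def k2_def r2_def by auto
    qed
    finally show ?thesis .
  qed
  ultimately show ?thesis unfolding k2_def r2_def by (simp add: ac_simps)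
qed

lemma ib_sum:
  assumes "velem (k,r,i,j)"
  shows "sum_list (map (\<lambda>p. H (snd p)) (inblock (k,r,i,j))) =
     (if j = 0 then H Pop else 0) + sum_list (map (\<lambda>q. H (InB (k,r,fst q, snd q))) (nbrs k (i,j)))"
  by (cases "j = 0"; cases "i < k"; cases "0 < i") (auto simp: inblock_def nbrs_def)

lemma nbrs_velem:
  assumes "velem (k,r,i,j)" "q \<in> set (nbrs k (i,j))"
  shows "velem (k,r,fst q,snd q)"
  using assms by (cases "j = 0") (auto simp: velem_def nbrs_def split: if_splits)

lemma sum_list_div: "sum_list (map (\<lambda>x. f x / (c::real)) xs) = sum_list (map f xs) / c"
  by (induction xs) (auto simp: add_divide_distrib)

lemma of_int_sum_list': "real_of_int (sum_list (map g xs)) = sum_list (map (\<lambda>x. real_of_int (g x)) xs)"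
  by (induction xs) auto

lemma elem_ineq:
  assumes ck: "chk True tbl" and l: "1 \<le> l" and ve: "velem e"
  shows "(\<Sum>s\<in>UNIV. G l e (act e s)) \<ge> lamc * cval l e"
proof -
  obtain k r i j where e: "e = (k,r,i,j)" by (cases e) auto
  define k2 where "k2 = fst (child_blk e)"
  define r2 where "r2 = snd (child_blk e)"
  have k2d: "k2 = 6 - fcnt k i j" unfolding k2_def by (simp add: e child_blk_def)
  have r2: "r2 < 8" unfolding r2_def by (rule velem_child(2)[OF ve])
  have k2v: "k2 = 4 \<or> k2 = 5" unfolding k2_def using velem_child(1)[OF ve] .
  define c :: real where "c = 2 ^ KK"
  have cpos: "c > 0" unfolding c_def by simp
  define X where "X = lk0 (cmpk (row l) k) (pidx k (i,j))"
  define S where "S = sum_list (map (\<lambda>q. lk0 (cmpk (row l) k) (pidx k q)) (nbrs k (i,j)))"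
  define D where "D = sum_list (map (lk0 (cmpk (row (Suc l)) k2)) [0..<k2+1])"
  define P :: int where "P = (if j = 0 \<and> \<not> l = 1 then 1 else 0)"
  have io: "ineq_ok (l = 1) (row l) (row (Suc l)) k (i,j)" using ineq_at[OF ck l] ve e by simp
  have io2: "0 \<le> X \<and> 52985 * 2^KK * X \<le> 10000 * (2^KK * S + (if j = 0 \<and> \<not> l = 1 then 2^(2*KK) else 0) + X * D)"
    using io unfolding ineq_ok_def Let_def fst_conv snd_conv X_def S_def D_def k2d .
  have p2int: "(2::int) ^ (2*KK) = 2^KK * 2^KK" by (simp add: mult_2 power_add)
  have intineq: "52985 * 2^KK * X \<le> 10000 * (2^KK * S + P * (2^KK * 2^KK) + X * D)"
    using io2 unfolding p2int by (cases "j = 0 \<and> l \<noteq> 1") (auto simp: P_def)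
  have XN: "X = Nval l k (i,j)" by (simp add: X_def Nval_def)
  have SN: "S = sum_list (map (\<lambda>q. Nval l k q) (nbrs k (i,j)))" by (simp add: S_def Nval_def)
  have DN: "D = sum_list (map (\<lambda>t. Nval (Suc l) k2 (t,0)) [0..<Suc k2])"
    unfolding D_def Nval_def pidx_def by simp
  have realineq: "52985 * c * X \<le> 10000 * (c * S + P * c^2 + X * D)"
  proof -
    have "real_of_int (52985 * 2^KK * X) \<le> real_of_int (10000 * (2^KK * S + P * (2^KK * 2^KK) + X * D))"
      using intineq by (simp only: of_int_le_iff)
    then show ?thesis unfolding c_def power2_eq_square by simp
  qed
  have cv: "cval l e = X / c" using ve by (simp add: cval_def e XN c_def)
  have s1: "(\<Sum>s\<in>UNIV. G l e (act e s)) = sum_list (map (\<lambda>p. G l e (snd p)) (inblock e))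
     + (\<Sum>t2\<in>{0..<Suc k2}. G l e (Push (k2, r2, t2, 0)))"
    unfolding k2_def r2_def by (rule sum_split[OF ve])
  have s2: "sum_list (map (\<lambda>p. G l e (snd p)) (inblock e)) = P + S / c"
  proof -
    have "sum_list (map (\<lambda>p. G l e (snd p)) (inblock e)) =
      (if j = 0 then G l e Pop else 0) + sum_list (map (\<lambda>q. G l e (InB (k,r,fst q, snd q))) (nbrs k (i,j)))"
      unfolding e by (rule ib_sum[OF ve[unfolded e]])
    also have "sum_list (map (\<lambda>q. G l e (InB (k,r,fst q, snd q))) (nbrs k (i,j))) =
        sum_list (map (\<lambda>q. real_of_int (Nval l k q) / c) (nbrs k (i,j)))"
      by (rule arg_cong[where f=sum_list], rule map_cong)
         (auto simp: G_def cval_def c_def dest: nbrs_velem[OF ve[unfolded e]])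
    also have "\<dots> = S / c" unfolding SN sum_list_div of_int_sum_list' by simp
    finally show ?thesis by (simp add: P_def G_def)
  qed
  have s3: "(\<Sum>t2\<in>{0..<Suc k2}. G l e (Push (k2, r2, t2, 0))) = (X / c) * (D / c)"
  proof -
    have "(\<Sum>t2\<in>{0..<Suc k2}. G l e (Push (k2, r2, t2, 0))) = (\<Sum>t2\<in>{0..<Suc k2}. (X / c) * (real_of_int (Nval (Suc l) k2 (t2,0)) / c))"
    proof (rule sum.cong[OF HOL.refl])
      fix t2 assume "t2 \<in> {0..<Suc k2}"
      then have "velem (k2, r2, t2, 0)" using k2v r2 by (auto simp: velem_def)
      then have "cval (Suc l) (k2,r2,t2,0) = real_of_int (Nval (Suc l) k2 (t2,0)) / c"
        by (simp add: cval_def c_def)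
      then show "G l e (Push (k2, r2, t2, 0)) = (X / c) * (real_of_int (Nval (Suc l) k2 (t2,0)) / c)"
        by (simp add: G_def cv)
    qed
    also have "\<dots> = (X / c) * ((\<Sum>t2\<in>{0..<Suc k2}. real_of_int (Nval (Suc l) k2 (t2,0))) / c)"
      by (simp only: sum_divide_distrib sum_distrib_left)
    also have "(\<Sum>t2\<in>{0..<Suc k2}. real_of_int (Nval (Suc l) k2 (t2,0))) = D"
      unfolding DN of_int_sum_list' by (simp only: sum_set_upt_conv_sum_list_nat[symmetric] set_upt)
    finally show ?thesis .
  qed
  have goal: "lamc * (X / c) \<le> P + S / c + (X / c) * (D / c)"
  proof -
    have "lamc * (X / c) * (10000 * c^2) = 52985 * c * X"
      using cpos by (simp add: lamc_def power2_eq_square field_simps)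
    also have "\<dots> \<le> 10000 * (c * S + P * c^2 + X * D)" by (rule realineq)
    also have "\<dots> = (P + S / c + (X / c) * (D / c)) * (10000 * c^2)"
      using cpos by (simp add: power2_eq_square field_simps)
    finally have fin: "lamc * (X / c) * (10000 * c^2) \<le> (P + S / c + (X / c) * (D / c)) * (10000 * c^2)" .
    show ?thesis by (rule mult_right_le_imp_le[OF fin]) (use cpos in simp)
  qed
  show ?thesis unfolding s1 s2 s3 cv using goal by simp
qed





fun chkp :: "bool \<Rightarrow> lvl list \<Rightarrow> lvl \<Rightarrow> bool" where
  "chkp tp [] nx = True"
| "chkp tp [a] nx = level_ok tp a nx"
| "chkp tp (a # b # r) nx = (level_ok tp a b \<and> chkp False (b # r) nx)"

lemma chk_chkp: "chk tp xs = chkp tp xs ([],[],[])"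
  by (induction tp xs rule: chk.induct) auto

lemma chkp_append: "xs \<noteq> [] \<Longrightarrow> ys \<noteq> [] \<Longrightarrow> chkp tp xs (hd ys) \<Longrightarrow> chkp False ys nx \<Longrightarrow> chkp tp (xs @ ys) nx"
proof (induction tp xs nx rule: chkp.induct)
  case (1 tp nx) then show ?case by simp
next
  case (2 tp a nx) then show ?case by (cases ys) auto
next
  case (3 tp a b r nx) then show ?case by auto
qed
lemma chk_tb0: "chkp True tb0 (hd tb1)" by code_simp
lemma chk_tb1: "chkp False tb1 (hd tb2)" by code_simp
lemma chk_tb2: "chkp False tb2 (hd tb3)" by code_simp
lemma chk_tb3: "chkp False tb3 (hd tb4)" by code_simp
lemma chk_tb4: "chkp False tb4 (hd tb5)" by code_simp
lemma chk_tb5: "chkp False tb5 (hd tb6)" by code_simp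
lemma chk_tb6: "chkp False tb6 (hd tb7)" by code_simp
lemma chk_tb7: "chkp False tb7 (([],[],[]))" by code_simp

lemma tbl_ok: "chk True tbl"
proof -
  have ne0: "tb0 \<noteq> []" by (simp add: tb0_def)
  have ne1: "tb1 \<noteq> []" by (simp add: tb1_def)
  have ne2: "tb2 \<noteq> []" by (simp add: tb2_def)
  have ne3: "tb3 \<noteq> []" by (simp add: tb3_def)
  have ne4: "tb4 \<noteq> []" by (simp add: tb4_def)
  have ne5: "tb5 \<noteq> []" by (simp add: tb5_def)
  have ne6: "tb6 \<noteq> []" by (simp add: tb6_def)
  have ne7: "tb7 \<noteq> []" by (simp add: tb7_def)
  have c7: "chkp False tb7 ([],[],[])" by (rule chk_tb7)
  have c6: "chkp False (tb6 @ tb7) ([],[],[])"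
    by (rule chkp_append) (use ne6 ne7 chk_tb6 c7 in simp_all)
  have c5: "chkp False (tb5 @ tb6 @ tb7) ([],[],[])"
    by (rule chkp_append) (use ne5 ne6 chk_tb5 c6 in simp_all)
  have c4: "chkp False (tb4 @ tb5 @ tb6 @ tb7) ([],[],[])"
    by (rule chkp_append) (use ne4 ne5 chk_tb4 c5 in simp_all)
  have c3: "chkp False (tb3 @ tb4 @ tb5 @ tb6 @ tb7) ([],[],[])"
    by (rule chkp_append) (use ne3 ne4 chk_tb3 c4 in simp_all)
  have c2: "chkp False (tb2 @ tb3 @ tb4 @ tb5 @ tb6 @ tb7) ([],[],[])"
    by (rule chkp_append) (use ne2 ne3 chk_tb2 c3 in simp_all)
  have c1: "chkp False (tb1 @ tb2 @ tb3 @ tb4 @ tb5 @ tb6 @ tb7) ([],[],[])"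
    by (rule chkp_append) (use ne1 ne2 chk_tb1 c2 in simp_all)
  have c0: "chkp True (tb0 @ tb1 @ tb2 @ tb3 @ tb4 @ tb5 @ tb6 @ tb7) ([],[],[])"
    by (rule chkp_append) (use ne0 ne1 chk_tb0 c1 in simp_all)
  then show ?thesis unfolding chk_chkp tbl_def .
qed

definition fval :: "elem list \<Rightarrow> real" where
  "fval v = (if valid v \<and> v \<noteq> [] then (\<Prod>n<length v. cval (Suc n) (v ! n)) else 0)"

lemma valid_prefix: "valid (xs @ [e]) \<Longrightarrow> valid xs"
  by (simp add: valid_def validf_snoc)

lemma fval_snoc:
  assumes "valid (xs @ [e])"
  shows "fval (xs @ [e]) = (if xs = [] then 1 else fval xs) * cval (Suc (length xs)) e"
proof -
  have vx: "valid xs" by (rule valid_prefix[OF assms])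
  have "(\<Prod>n<length (xs @ [e]). cval (Suc n) ((xs @ [e]) ! n)) =
        (\<Prod>n<length xs. cval (Suc n) ((xs @ [e]) ! n)) * cval (Suc (length xs)) e"
    by (simp add: prod.lessThan_Suc)
  also have "(\<Prod>n<length xs. cval (Suc n) ((xs @ [e]) ! n)) = (\<Prod>n<length xs. cval (Suc n) (xs ! n))"
    by (rule prod.cong) (auto simp: nth_append)
  finally show ?thesis using assms vx by (auto simp: fval_def)
qed

lemma fval_nonneg: "chk True tbl \<Longrightarrow> 0 \<le> fval v"
  by (auto simp: fval_def intro!: prod_nonneg cval_nonneg)

lemma validf_set: "validf B v \<Longrightarrow> e \<in> set v \<Longrightarrow> velem e"
  by (induction B v rule: validf.induct) auto

lemma fval_sub:
  assumes ck: "chk True tbl" and vv: "valid v"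
  shows "(\<Sum>s\<in>UNIV. fval (step v s)) \<ge> lamc * fval v"
proof (cases "v = []")
  case True
  then show ?thesis using fval_nonneg[OF ck] by (simp add: fval_def sum_nonneg)
next
  case False
  then obtain xs e where v: "v = xs @ [e]" by (metis append_butlast_last_id)
  define b where "b = (if xs = [] then 1 else fval xs)"
  define l where "l = Suc (length xs)"
  have b0: "0 \<le> b" using fval_nonneg[OF ck] by (simp add: b_def)
  have ve: "velem e" using vv by (auto simp: v valid_def validf_snoc)
  have fv: "fval v = b * cval l e" unfolding v b_def l_def by (rule fval_snoc[OF vv[unfolded v]])
  have each: "fval (step v s) = b * G l e (act e s)" for s
  proof (cases "act e s")
    case (InB e')
    have st: "step v s = xs @ [e']" by (simp add: v step_snoc InB)
    have "valid (xs @ [e'])" using step_valid_rev[OF vv, of s] st by simp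
    then show ?thesis using st fval_snoc[of xs e'] by (simp add: G_def InB b_def l_def)
  next
    case Pop
    have st: "step v s = xs" by (simp add: v step_snoc Pop)
    show ?thesis
    proof (cases "xs = []")
      case True then show ?thesis using st by (simp add: G_def Pop b_def l_def fval_def)
    next
      case False then show ?thesis using st by (simp add: G_def Pop b_def l_def)
    qed
  next
    case (Push e2)
    have st: "step v s = (xs @ [e]) @ [e2]" by (simp add: v step_snoc Push)
    have vs: "valid ((xs @ [e]) @ [e2])" using step_valid_rev[OF vv, of s] st by simp
    have "fval ((xs @ [e]) @ [e2]) = fval (xs @ [e]) * cval (Suc (length (xs @ [e]))) e2"
      using fval_snoc[OF vs] by simp
    then show ?thesis using st fv by (simp add: G_def Push v l_def)
  qed
  have "(\<Sum>s\<in>UNIV. fval (step v s)) = b * (\<Sum>s\<in>UNIV. G l e (act e s))"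
    by (simp add: each sum_distrib_left)
  also have "\<dots> \<ge> b * (lamc * cval l e)"
    using elem_ineq[OF ck _ ve, of l] b0 by (simp add: l_def mult_left_mono)
  finally show ?thesis using fv by (simp add: mult_ac)
qed

lemma finite_velem: "finite {e. velem e}"
proof -
  have "{e. velem e} \<subseteq> {..7::nat} \<times> {..7::nat} \<times> {..7::nat} \<times> {..5::nat}"
    by (auto simp: velem_def)
  then show ?thesis by (rule finite_subset) auto
qed

lemma row_beyond: "length tbl < l \<Longrightarrow> cval l e = 0"
  by (simp add: cval_def Nval_def row_def cmpk_def lk0_def)

lemma supp_sub: "{v. fval v \<noteq> 0} \<subseteq> {v. set v \<subseteq> {e. velem e} \<and> length v \<le> length tbl}"
proof
  fix v assume "v \<in> {v. fval v \<noteq> 0}"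
  then have nz: "fval v \<noteq> 0" by simp
  then have vv: "valid v" and ne: "v \<noteq> []" by (auto simp: fval_def split: if_splits)
  have "set v \<subseteq> {e. velem e}" using vv validf_set unfolding valid_def by blast
  moreover have "length v \<le> length tbl"
  proof (rule ccontr)
    assume "\<not> length v \<le> length tbl"
    then have "cval (Suc (length v - 1)) (v ! (length v - 1)) = 0"
      using ne by (intro row_beyond) auto
    then have "(\<Prod>n<length v. cval (Suc n) (v ! n)) = 0"
      using ne by (intro prod_zero) (auto intro!: bexI[of _ "length v - 1"])
    then show False using nz vv ne by (simp add: fval_def)
  qed
  ultimately show "v \<in> {v. set v \<subseteq> {e. velem e} \<and> length v \<le> length tbl}" by simp
qed

lemma finite_supp: "finite {v. fval v \<noteq> 0}"
  by (rule finite_subset[OF supp_sub finite_lists_length_le[OF finite_velem]])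

lemma supp_valid: "{v. fval v \<noteq> 0} \<subseteq> {v. valid v}"
  by (auto simp: fval_def split: if_splits)

definition v0 :: "elem list" where "v0 = [(7,0,0,0)]"

lemma v0_valid: "valid v0"
  by (simp add: v0_def valid_def velem_def blk_def)

lemma Nval_v0: "Nval (Suc 0) 7 (0,0) = 10052852"
  by code_simp

lemma fval_v0: "fval v0 > 0"
proof -
  have "fval v0 = cval 1 (7,0,0,0)" using v0_valid by (simp add: fval_def v0_def)
  also have "\<dots> = 10052852 / 2 ^ KK" by (simp add: cval_def velem_def Nval_v0)
  finally show ?thesis by simp
qed

lemma main_bound:
  assumes ck: "chk True tbl"
  shows "ereal 0.6623 \<le> spectral_radius_J2"
proof -
  define Supp where "Supp = {v. fval v \<noteq> 0}"
  define T where "T = (\<Sum>y\<in>Supp. fval y)"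
  define C where "C = (fval v0 / T) ^ 2"
  have finS: "finite Supp" unfolding Supp_def by (rule finite_supp)
  have v0S: "v0 \<in> Supp" unfolding Supp_def using fval_v0 by simp
  have Tpos: "T > 0"
  proof -
    have "fval v0 \<le> T" unfolding T_def by (rule member_le_sum[OF v0S _ finS]) (use fval_nonneg[OF ck] in auto)
    then show ?thesis using fval_v0 by linarith
  qed
  have Cpos: "C > 0" unfolding C_def using Tpos fval_v0 by simp
  have lam0: "lamc \<ge> 0" by (simp add: lamc_def)
  have rb: "return_prob (2 * n) \<ge> (lamc / 8) ^ (2 * n) * C" for n
    unfolding C_def T_def
    by (rule return_lower[where VS="{v. valid v}" and st=step and rep=rep and Supp=Supp and f=fval])
       (use step_valid_rev step_J2 finS supp_valid fval_nonneg[OF ck] lam0 fval_sub[OF ck] v0_valid fval_v0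
         in \<open>auto simp: Supp_def\<close>)
  define q where "q = 0.6623 * 8 / lamc"
  have q1: "q < 1" by (simp add: q_def lamc_def)
  have "(\<lambda>n. root n C) \<longlonglongrightarrow> 1" by (rule LIMSEQ_root_const[OF Cpos])
  then have "eventually (\<lambda>n. q < root n C) sequentially" using q1 by (rule order_tendstoD(1))
  then obtain N where N: "\<And>n. n \<ge> N \<Longrightarrow> q < root n C" by (auto simp: eventually_sequentially)
  have ev: "eventually (\<lambda>n. ereal 0.6623 \<le> ((\<lambda>n. ereal (root n (return_prob n))) \<circ> (\<lambda>n. 2 * n)) n) sequentially"
    unfolding eventually_sequentially
  proof (intro exI[of _ "Suc N"] allI impI)
    fix n assume n: "Suc N \<le> n"
    have n2: "0 < 2 * n" using n by simp
    have "root (2 * n) ((lamc / 8) ^ (2 * n) * C) = (lamc / 8) * root (2 * n) C"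
      using n2 lam0 by (simp add: real_root_mult real_root_power_cancel)
    have r2: "root (2 * n) ((lamc / 8) ^ (2 * n) * C) \<le> root (2 * n) (return_prob (2 * n))"
      using rb[of n] n2 by (simp add: real_root_le_mono)
    have r3: "q \<le> root (2 * n) C" using N n by (simp add: less_imp_le)
    have r4: "(lamc / 8) * q = 0.6623" by (simp add: q_def lamc_def)
    have "(lamc / 8) * q \<le> (lamc / 8) * root (2 * n) C"
      by (rule mult_left_mono[OF r3]) (use lam0 in simp)
    then have "0.6623 \<le> root (2 * n) (return_prob (2 * n))"
      using r2 r4 \<open>root (2 * n) ((lamc / 8) ^ (2 * n) * C) = (lamc / 8) * root (2 * n) C\<close> by linarith
    then show "ereal 0.6623 \<le> ((\<lambda>n. ereal (root n (return_prob n))) \<circ> (\<lambda>n. 2 * n)) n" by simp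
  qed
  have "ereal 0.6623 \<le> limsup ((\<lambda>n. ereal (root n (return_prob n))) \<circ> (\<lambda>n. 2 * n))"
    by (rule le_Limsup[OF trivial_limit_sequentially ev])
  also have "\<dots> \<le> limsup (\<lambda>n. ereal (root n (return_prob n)))"
    by (rule limsup_subseq_mono) (simp add: strict_mono_def)
  finally show ?thesis unfolding spectral_radius_J2_def .
qed


theorem mainTheorem7:
  shows "ereal 0.6623 \<le> spectral_radius_J2"
  by (rule main_bound[OF tbl_ok])

end
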